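(* Let $\mathbb{K}\in\{\mathbb{R},\mathbb{C}\}$, let $B$ be a commutative Banach algebra over $\mathbb{K}$, $(\omega_k)_{k\in\mathbb{N}}$ a convex growth family and $(\mathcal{H},\Sigma)$ a combinatorial Hopf algebra such that $((\mathcal{H},\Sigma),(\omega_k)_k)$ is a control pair. Then the space $\ell^\infty_{\rightarrow}(\mathcal{H},B)$ of controlled linear maps is a locally convex unital topological algebra with respect to the convolution product $\phi\star\psi=m_B\circ(\phi\otimes\psi)\circ\Delta$, with unit $1_B\cdot\epsilon$.
   Context: A growth family is a family $(\omega_k)_{k\in\mathbb{N}}$ of functions $\omega_k\colon\mathbb{N}_0\to\mathbb{N}$ with (W1) $\omega_k(0)=1$, $\omega_k(n)\le\omega_{k+1}(n)$; (W2) $\omega_k(n)\omega_k(m)\le\omega_k(n+m)$; (W3) for every $k_1$ there is $k_2\ge k_1$ with $\omega_{k_2}(n)\ge2^n\omega_{k_1}(n)$ for all $n$; convex means: for each $k_1$ one can choose such $k_2$ so that additionally for every $k_3\ge k_2$ some $\alpha\in]0,1[$ satisfies $\omega_{k_1}(n)^\alpha\omega_{k_3}(n)^{1-\alpha}\le\omega_{k_2}(n)$ for all $n$. For a set $J$ graded by $|\cdot|\colon J\to\mathbb{N}_0$: $\ell^1_k(J)$ = formal sums $\sum c_\tau\tau$ with $\sum|c_\tau|\omega_k(|\tau|)<\infty$, $\ell^1_{\leftarrow}(J)=\bigcap_k\ell^1_k(J)$ (projective limit topology); $\ell^\infty_k(J,B)$ = maps $f\colon J\to B$ with $\sup_\tau\|f(\tau)\|/\omega_k(|\tau|)<\infty$,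 $\ell^\infty_{\rightarrow}(J,B)=\bigcup_k\ell^\infty_k(J,B)$ with direct limit topology. A commutative Banach algebra is unital, commutative, with complete submultiplicative norm and $\|1_B\|=1$. A combinatorial Hopf algebra $(\mathcal{H},\Sigma)$ is a graded connected Hopf algebra $\mathcal{H}$ over $\mathbb{K}$ (coproduct $\Delta$, counit $\epsilon$, antipode $S$) together with $\Sigma\subseteq\mathcal{H}$ such that $\mathcal{H}$ is as an algebra (via a fixed isomorphism) the commutative polynomial algebra $\mathbb{K}[\Sigma]$ or the noncommutative polynomial algebra $\mathbb{K}\langle\Sigma\rangle$, $\Sigma$ graded by the Hopf grading. Let $M$ be the free commutative monoid resp. free monoid on $\Sigma$ (graded by sums of degrees), so $\mathcal{H}=\mathbb{K}^{(M)}$ and $\mathcal{H}\otimes\mathcal{H}=\mathbb{K}^{(M\times M)}$ with $|(\mu,\sigma)|=|\mu|+|\sigma|$. $((\mathcal{H},\Sigma),(\omega_k))$ is a control pair if $\Delta$ and $S$ extend to continuous linear maps $\ell^1_{\leftarrow}(M)\to\ell^1_{\leftarrow}(M\times M)$ resp. $\ell^1_{\leftarrow}(M)\to\ell^1_{\leftarrow}(M)$. A linear map $\phi\colon\mathcal{H}\to B$ is controlled if $\phi|_M\in\ell^\infty_{\rightarrow}(M,B)$; the space $\ell^\infty_{\rightarrow}(\mathcal{H},B)$ of controlled linear maps is identified with $\ell^\infty_{\rightarrow}(M,B)$ as a locally convex space. *)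

theory Defs
  imports "HOL-Analysis.Analysis"
begin

definition is_R_or_C :: "'k::real_normed_field itself \<Rightarrow> bool" where
  "is_R_or_C _ \<longleftrightarrow>
     (\<forall>z::'k. \<exists>r. z = of_real r) \<or>
     (\<exists>i::'k. i * i = -1 \<and> (\<forall>z::'k. \<exists>a b. z = of_real a + of_real b * i))"

text \<open>A commutative Banach algebra over K: the type class part gives a unital commutative
  ring with complete submultiplicative norm and norm 1 = 1 (real structure); scaleK is the
  K-scalar multiplication, compatible with the real one.\<close>
definition K_banach_algebra :: "('k::real_normed_field \<Rightarrow> 'b::{banach,real_normed_algebra_1,comm_ring_1} \<Rightarrow> 'b) \<Rightarrow> bool" where
  "K_banach_algebra scaleK \<longleftrightarrow>
     (\<forall>a x y. scaleK a (x + y) = scaleK a x + scaleK a y) \<and>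
     (\<forall>a b x. scaleK (a + b) x = scaleK a x + scaleK b x) \<and>
     (\<forall>a b x. scaleK a (scaleK b x) = scaleK (a * b) x) \<and>
     (\<forall>x. scaleK 1 x = x) \<and>
     (\<forall>a x y. scaleK a (x * y) = scaleK a x * y) \<and>
     (\<forall>a x. norm (scaleK a x) = norm a * norm x) \<and>
     (\<forall>r x. scaleK (of_real r) x = scaleR r x)"

definition growth_family :: "(nat \<Rightarrow> nat \<Rightarrow> nat) \<Rightarrow> bool" where
  "growth_family \<omega> \<longleftrightarrow>
     (\<forall>k n. \<omega> k n \<ge> 1) \<and>
     (\<forall>k. \<omega> k 0 = 1) \<and> (\<forall>k n. \<omega> k n \<le> \<omega> (Suc k) n) \<and>
     (\<forall>k n m. \<omega> k n * \<omega> k m \<le> \<omega> k (n + m)) \<and>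
     (\<forall>k1. \<exists>k2\<ge>k1. \<forall>n. \<omega> k2 n \<ge> 2 ^ n * \<omega> k1 n)"

definition convex_growth_family :: "(nat \<Rightarrow> nat \<Rightarrow> nat) \<Rightarrow> bool" where
  "convex_growth_family \<omega> \<longleftrightarrow> growth_family \<omega> \<and>
     (\<forall>k1. \<exists>k2\<ge>k1. (\<forall>n. \<omega> k2 n \<ge> 2 ^ n * \<omega> k1 n) \<and>
        (\<forall>k3\<ge>k2. \<exists>\<alpha>::real. 0 < \<alpha> \<and> \<alpha> < 1 \<and>
           (\<forall>n. real (\<omega> k1 n) powr \<alpha> * real (\<omega> k3 n) powr (1 - \<alpha>) \<le> real (\<omega> k2 n))))"

text \<open>The Hopf algebra is H = K^(M), where M (a type with monoid structure) is the free
  monoid resp. free commutative monoid on the set of generators Sigma. A linear map on H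
  (resp. from H to H tensor H = K^(M x M)) is given by its values on the basis M, which are
  finitely supported coefficient functions.\<close>

definition supp :: "('a \<Rightarrow> 'c::zero) \<Rightarrow> 'a set" where
  "supp f = {x. f x \<noteq> 0}"

definition free_monoid_on :: "'m::monoid_mult set \<Rightarrow> bool" where
  "free_monoid_on \<Sigma> \<longleftrightarrow> (\<forall>\<mu>::'m. \<exists>!xs. set xs \<subseteq> \<Sigma> \<and> prod_list xs = \<mu>)"

definition free_comm_monoid_on :: "'m::monoid_mult set \<Rightarrow> bool" where
  "free_comm_monoid_on \<Sigma> \<longleftrightarrow> (\<forall>x y::'m. x * y = y * x) \<and>
     (\<forall>\<mu>::'m. (\<exists>xs. set xs \<subseteq> \<Sigma> \<and> prod_list xs = \<mu>) \<and>
        (\<forall>xs ys. set xs \<subseteq> \<Sigma> \<longrightarrow> set ys \<subseteq> \<Sigma> \<longrightarrow> prod_list xs = \<mu> \<longrightarrow> prod_list ys = \<mu>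
            \<longrightarrow> mset xs = mset ys))"

text \<open>Graded connected Hopf algebra structure on K^(M) whose algebra structure is the monoid
  algebra of M, with grading deg (a monoid homomorphism to (nat,+)), coproduct Delta,
  counit eps and antipode S, written in coordinates.\<close>
definition graded_connected_hopf ::
  "('m::monoid_mult \<Rightarrow> nat) \<Rightarrow> ('m \<Rightarrow> 'm \<times> 'm \<Rightarrow> 'k::field) \<Rightarrow> ('m \<Rightarrow> 'k) \<Rightarrow> ('m \<Rightarrow> 'm \<Rightarrow> 'k) \<Rightarrow> bool" where
  "graded_connected_hopf deg \<Delta> \<epsilon> S \<longleftrightarrow>
     \<comment> \<open>well-definedness: images of basis vectors are finitely supported\<close>
     (\<forall>\<mu>. finite (supp (\<Delta> \<mu>))) \<and> (\<forall>\<mu>. finite (supp (S \<mu>))) \<and>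
     \<comment> \<open>grading: algebra grading, connectedness, graded coproduct, counit, antipode\<close>
     deg 1 = 0 \<and> (\<forall>\<mu> \<nu>. deg (\<mu> * \<nu>) = deg \<mu> + deg \<nu>) \<and>
     (\<forall>\<mu>. deg \<mu> = 0 \<longrightarrow> \<mu> = 1) \<and>
     (\<forall>\<mu> p. \<Delta> \<mu> p \<noteq> 0 \<longrightarrow> deg (fst p) + deg (snd p) = deg \<mu>) \<and>
     (\<forall>\<mu>. \<epsilon> \<mu> \<noteq> 0 \<longrightarrow> deg \<mu> = 0) \<and>
     (\<forall>\<mu> \<nu>. S \<mu> \<nu> \<noteq> 0 \<longrightarrow> deg \<nu> = deg \<mu>) \<and>
     \<comment> \<open>coassociativity\<close>
     (\<forall>\<mu> a b c.
        (\<Sum>p\<in>supp (\<Delta> \<mu>). \<Delta> \<mu> p * (if snd p = c then \<Delta> (fst p) (a, b) else 0)) =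
        (\<Sum>p\<in>supp (\<Delta> \<mu>). \<Delta> \<mu> p * (if fst p = a then \<Delta> (snd p) (b, c) else 0))) \<and>
     \<comment> \<open>counit\<close>
     (\<forall>\<mu> \<nu>. (\<Sum>p\<in>supp (\<Delta> \<mu>). \<Delta> \<mu> p * \<epsilon> (fst p) * (if snd p = \<nu> then 1 else 0)) =
             (if \<mu> = \<nu> then 1 else 0)) \<and>
     (\<forall>\<mu> \<nu>. (\<Sum>p\<in>supp (\<Delta> \<mu>). \<Delta> \<mu> p * (if fst p = \<nu> then 1 else 0) * \<epsilon> (snd p)) =
             (if \<mu> = \<nu> then 1 else 0)) \<and>
     \<comment> \<open>coproduct and counit are algebra homomorphisms\<close>
     (\<forall>\<mu> \<nu> a b. \<Delta> (\<mu> * \<nu>) (a, b) =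
        (\<Sum>p\<in>supp (\<Delta> \<mu>). \<Sum>q\<in>supp (\<Delta> \<nu>). \<Delta> \<mu> p * \<Delta> \<nu> q *
            (if fst p * fst q = a \<and> snd p * snd q = b then 1 else 0))) \<and>
     (\<forall>p. \<Delta> 1 p = (if p = (1, 1) then 1 else 0)) \<and>
     (\<forall>\<mu> \<nu>. \<epsilon> (\<mu> * \<nu>) = \<epsilon> \<mu> * \<epsilon> \<nu>) \<and> \<epsilon> 1 = 1 \<and>
     \<comment> \<open>antipode\<close>
     (\<forall>\<mu> \<nu>. (\<Sum>p\<in>supp (\<Delta> \<mu>). \<Delta> \<mu> p *
               (\<Sum>z\<in>supp (S (fst p)). S (fst p) z * (if z * snd p = \<nu> then 1 else 0))) =
             \<epsilon> \<mu> * (if \<nu> = 1 then 1 else 0)) \<and>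
     (\<forall>\<mu> \<nu>. (\<Sum>p\<in>supp (\<Delta> \<mu>). \<Delta> \<mu> p *
               (\<Sum>z\<in>supp (S (snd p)). S (snd p) z * (if fst p * z = \<nu> then 1 else 0))) =
             \<epsilon> \<mu> * (if \<nu> = 1 then 1 else 0))"

definition combinatorial_hopf ::
  "'m::monoid_mult set \<Rightarrow> ('m \<Rightarrow> nat) \<Rightarrow> ('m \<Rightarrow> 'm \<times> 'm \<Rightarrow> 'k::field) \<Rightarrow> ('m \<Rightarrow> 'k) \<Rightarrow> ('m \<Rightarrow> 'm \<Rightarrow> 'k) \<Rightarrow> bool" where
  "combinatorial_hopf \<Sigma> deg \<Delta> \<epsilon> S \<longleftrightarrow>
     (free_monoid_on \<Sigma> \<or> free_comm_monoid_on \<Sigma>) \<and> graded_connected_hopf deg \<Delta> \<epsilon> S"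

definition in_l1 :: "(nat \<Rightarrow> nat \<Rightarrow> nat) \<Rightarrow> ('j \<Rightarrow> nat) \<Rightarrow> nat \<Rightarrow> ('j \<Rightarrow> 'k::real_normed_field) \<Rightarrow> bool" where
  "in_l1 \<omega> g k c \<longleftrightarrow> (\<lambda>\<tau>. norm (c \<tau>) * real (\<omega> k (g \<tau>))) summable_on UNIV"

definition l1_norm :: "(nat \<Rightarrow> nat \<Rightarrow> nat) \<Rightarrow> ('j \<Rightarrow> nat) \<Rightarrow> nat \<Rightarrow> ('j \<Rightarrow> 'k::real_normed_field) \<Rightarrow> real" where
  "l1_norm \<omega> g k c = (\<Sum>\<^sub>\<infinity>\<tau>. norm (c \<tau>) * real (\<omega> k (g \<tau>)))"

text \<open>The projective limit l1_<-(J) (as a set; its topology is the one given by the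
  increasing family of norms l1_norm k).\<close>
definition l1_proj :: "(nat \<Rightarrow> nat \<Rightarrow> nat) \<Rightarrow> ('j \<Rightarrow> nat) \<Rightarrow> ('j \<Rightarrow> 'k::real_normed_field) set" where
  "l1_proj \<omega> g = {c. \<forall>k. in_l1 \<omega> g k c}"

text \<open>A linear map on K^(I) (given on basis vectors by T :: 'i => ('j => 'k)) extends to a
  continuous linear map l1_<-(I) -> l1_<-(J).  Continuity of a linear map between these
  projective limits (increasing families of seminorms) is expressed by seminorm estimates.\<close>
definition extends_continuously ::
  "(nat \<Rightarrow> nat \<Rightarrow> nat) \<Rightarrow> ('i \<Rightarrow> nat) \<Rightarrow> ('j \<Rightarrow> nat) \<Rightarrow> ('i \<Rightarrow> 'j \<Rightarrow> 'k::real_normed_field) \<Rightarrow> bool" where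
  "extends_continuously \<omega> gI gJ T \<longleftrightarrow>
     (\<exists>D :: ('i \<Rightarrow> 'k) \<Rightarrow> ('j \<Rightarrow> 'k).
        (\<forall>c\<in>l1_proj \<omega> gI. D c \<in> l1_proj \<omega> gJ) \<and>
        (\<forall>c\<in>l1_proj \<omega> gI. \<forall>d\<in>l1_proj \<omega> gI. D (\<lambda>x. c x + d x) = (\<lambda>y. D c y + D d y)) \<and>
        (\<forall>a. \<forall>c\<in>l1_proj \<omega> gI. D (\<lambda>x. a * c x) = (\<lambda>y. a * D c y)) \<and>
        (\<forall>\<mu>. D (\<lambda>x. if x = \<mu> then 1 else 0) = T \<mu>) \<and>
        (\<forall>k. \<exists>k' C. \<forall>c\<in>l1_proj \<omega> gI. l1_norm \<omega> gJ k (D c) \<le> C * l1_norm \<omega> gI k' c))"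

definition control_pair ::
  "('m::monoid_mult \<Rightarrow> nat) \<Rightarrow> ('m \<Rightarrow> 'm \<times> 'm \<Rightarrow> 'k::real_normed_field) \<Rightarrow> ('m \<Rightarrow> 'm \<Rightarrow> 'k) \<Rightarrow> (nat \<Rightarrow> nat \<Rightarrow> nat) \<Rightarrow> bool" where
  "control_pair deg \<Delta> S \<omega> \<longleftrightarrow>
     extends_continuously \<omega> deg (\<lambda>p. deg (fst p) + deg (snd p)) \<Delta> \<and>
     extends_continuously \<omega> deg deg S"

text \<open>A linear map H -> B is identified with its restriction to the basis M.\<close>
definition linf :: "(nat \<Rightarrow> nat \<Rightarrow> nat) \<Rightarrow> ('j \<Rightarrow> nat) \<Rightarrow> nat \<Rightarrow> ('j \<Rightarrow> 'b::real_normed_vector) set" where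
  "linf \<omega> g k = {f. \<exists>C. \<forall>\<tau>. norm (f \<tau>) \<le> C * real (\<omega> k (g \<tau>))}"

definition linf_norm :: "(nat \<Rightarrow> nat \<Rightarrow> nat) \<Rightarrow> ('j \<Rightarrow> nat) \<Rightarrow> nat \<Rightarrow> ('j \<Rightarrow> 'b::real_normed_vector) \<Rightarrow> real" where
  "linf_norm \<omega> g k f = (SUP \<tau>. norm (f \<tau>) / real (\<omega> k (g \<tau>)))"

definition linf_ind :: "(nat \<Rightarrow> nat \<Rightarrow> nat) \<Rightarrow> ('j \<Rightarrow> nat) \<Rightarrow> ('j \<Rightarrow> 'b::real_normed_vector) set" where
  "linf_ind \<omega> g = (\<Union>k. linf \<omega> g k)"

text \<open>Continuous seminorms for the locally convex inductive limit topology: seminorms on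
  linf_ind (over K) whose restriction to every step linf k is continuous.\<close>
definition LB_seminorm ::
  "(nat \<Rightarrow> nat \<Rightarrow> nat) \<Rightarrow> ('j \<Rightarrow> nat) \<Rightarrow> ('k::real_normed_field \<Rightarrow> 'b::real_normed_vector \<Rightarrow> 'b) \<Rightarrow> (('j \<Rightarrow> 'b) \<Rightarrow> real) \<Rightarrow> bool" where
  "LB_seminorm \<omega> g scaleK q \<longleftrightarrow>
     (\<forall>f\<in>linf_ind \<omega> g. q f \<ge> 0) \<and>
     (\<forall>f\<in>linf_ind \<omega> g. \<forall>h\<in>linf_ind \<omega> g. q (\<lambda>\<tau>. f \<tau> + h \<tau>) \<le> q f + q h) \<and>
     (\<forall>a. \<forall>f\<in>linf_ind \<omega> g. q (\<lambda>\<tau>. scaleK a (f \<tau>)) = norm a * q f) \<and>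
     (\<forall>k. \<exists>C. \<forall>f\<in>linf \<omega> g k. q f \<le> C * linf_norm \<omega> g k f)"

text \<open>The locally convex inductive (direct) limit topology on linf_ind: the locally convex
  topology generated by all continuous seminorms.\<close>
definition LB_topology ::
  "(nat \<Rightarrow> nat \<Rightarrow> nat) \<Rightarrow> ('j \<Rightarrow> nat) \<Rightarrow> ('k::real_normed_field \<Rightarrow> 'b::real_normed_vector \<Rightarrow> 'b) \<Rightarrow> ('j \<Rightarrow> 'b) topology" where
  "LB_topology \<omega> g scaleK = topology (\<lambda>U. U \<subseteq> linf_ind \<omega> g \<and>
     (\<forall>f\<in>U. \<exists>q e. LB_seminorm \<omega> g scaleK q \<and> e > 0 \<and>
        {h\<in>linf_ind \<omega> g. q (\<lambda>\<tau>. h \<tau> - f \<tau>) < e} \<subseteq> U))"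

definition convolution ::
  "('m \<Rightarrow> 'm \<times> 'm \<Rightarrow> 'k) \<Rightarrow> ('k::zero \<Rightarrow> 'b::comm_ring_1 \<Rightarrow> 'b) \<Rightarrow> ('m \<Rightarrow> 'b) \<Rightarrow> ('m \<Rightarrow> 'b) \<Rightarrow> ('m \<Rightarrow> 'b)" where
  "convolution \<Delta> scaleK \<phi> \<psi> = (\<lambda>\<mu>. \<Sum>p\<in>supp (\<Delta> \<mu>). scaleK (\<Delta> \<mu> p) (\<phi> (fst p) * \<psi> (snd p)))"

definition conv_unit :: "('m \<Rightarrow> 'k) \<Rightarrow> ('k \<Rightarrow> 'b::comm_ring_1 \<Rightarrow> 'b) \<Rightarrow> ('m \<Rightarrow> 'b)" where
  "conv_unit \<epsilon> scaleK = (\<lambda>\<mu>. scaleK (\<epsilon> \<mu>) 1)"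

end

theory Submission
  imports Defs
begin


lemma aux_div: "(c::real) > 0 \<Longrightarrow> (e / (2 * c)) * c = e/2" by simp

locale LBset =
  fixes scaleK :: "'k::real_normed_field \<Rightarrow> 'b::{banach,real_normed_algebra_1,comm_ring_1} \<Rightarrow> 'b"
    and \<omega> :: "nat \<Rightarrow> nat \<Rightarrow> nat"
    and deg :: "'j \<Rightarrow> nat"
  assumes KB: "K_banach_algebra scaleK"
    and GF: "growth_family \<omega>"
begin

lemma sK_add: "scaleK a (x + y) = scaleK a x + scaleK a y"
  using KB unfolding K_banach_algebra_def by blast
lemma sK_add2: "scaleK (a + b) x = scaleK a x + scaleK b x"
  using KB unfolding K_banach_algebra_def by blast
lemma sK_assoc: "scaleK a (scaleK b x) = scaleK (a * b) x"
  using KB unfolding K_banach_algebra_def by blast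
lemma sK_one: "scaleK 1 x = x"
  using KB unfolding K_banach_algebra_def by blast
lemma sK_mult: "scaleK a (x * y) = scaleK a x * y"
  using KB unfolding K_banach_algebra_def by blast
lemma sK_norm: "norm (scaleK a x) = norm a * norm x"
  using KB unfolding K_banach_algebra_def by blast
lemma sK_zero: "scaleK a 0 = 0"
  using sK_add[of a 0 0] by simp
lemma sK_zero2: "scaleK 0 x = 0"
  using sK_add2[of 0 0 x] by simp
lemma sK_diff: "scaleK a (x - y) = scaleK a x - scaleK a y"
  using sK_add[of a "x - y" y] by (simp add: algebra_simps)
lemma sK_diff2: "scaleK (a - b) x = scaleK a x - scaleK b x"
  using sK_add2[of "a - b" b x] by (simp add: algebra_simps)
lemma sK_sum: "scaleK a (\<Sum>i\<in>I. f i) = (\<Sum>i\<in>I. scaleK a (f i))"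
  by (induction I rule: infinite_finite_induct) (auto simp: sK_zero sK_add)
lemma sK_mult2: "scaleK a (x * y) = x * scaleK a y"
  using sK_mult[of a y x] by (simp add: mult.commute)
lemma sK_comm: "scaleK a (scaleK b x) = scaleK b (scaleK a x)"
  by (simp add: sK_assoc mult.commute)

lemma om_ge1: "\<omega> k n \<ge> 1"
  using GF unfolding growth_family_def by blast
lemma om_pos: "real (\<omega> k n) > 0"
  using om_ge1[of k n] by simp
lemma om_mono: "k \<le> k' \<Longrightarrow> \<omega> k n \<le> \<omega> k' n"
proof -
  have "\<And>k. \<omega> k n \<le> \<omega> (Suc k) n" using GF unfolding growth_family_def by blast
  thus "k \<le> k' \<Longrightarrow> \<omega> k n \<le> \<omega> k' n" by (rule lift_Suc_mono_le[of "\<lambda>k. \<omega> k n"])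
qed
lemma om_mult: "\<omega> k n * \<omega> k m \<le> \<omega> k (n + m)"
  using GF unfolding growth_family_def by blast

abbreviation "L \<equiv> linf_ind \<omega> deg :: ('j \<Rightarrow> 'b) set"
abbreviation "nrm k f \<equiv> linf_norm \<omega> deg k (f :: 'j \<Rightarrow> 'b)"

lemma linf_bdd: "f \<in> linf \<omega> deg k \<Longrightarrow> bdd_above (range (\<lambda>\<tau>. norm (f \<tau>) / real (\<omega> k (deg \<tau>))))"
  unfolding linf_def bdd_above_def
proof safe
  fix C assume C: "\<forall>\<tau>. norm (f \<tau>) \<le> C * real (\<omega> k (deg \<tau>))"
  show "\<exists>M. \<forall>x\<in>range (\<lambda>\<tau>. norm (f \<tau>) / real (\<omega> k (deg \<tau>))). x \<le> M"
    apply (rule exI[of _ C]) using C om_pos by (auto simp: divide_le_eq)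
qed

lemma nrm_bound: "f \<in> linf \<omega> deg k \<Longrightarrow> norm (f \<tau>) \<le> nrm k f * real (\<omega> k (deg \<tau>))"
proof -
  assume f: "f \<in> linf \<omega> deg k"
  have "norm (f \<tau>) / real (\<omega> k (deg \<tau>)) \<le> nrm k f"
    unfolding linf_norm_def by (rule cSUP_upper[OF _ linf_bdd[OF f]]) simp
  thus ?thesis using om_pos[of k "deg \<tau>"] by (simp add: divide_le_eq)
qed

lemma nrm_nonneg: "f \<in> linf \<omega> deg k \<Longrightarrow> 0 \<le> nrm k f"
proof -
  assume f: "f \<in> linf \<omega> deg k"
  have "norm (f undefined) / real (\<omega> k (deg undefined)) \<le> nrm k f"
    unfolding linf_norm_def by (rule cSUP_upper[OF _ linf_bdd[OF f]]) simp
  moreover have "0 \<le> norm (f undefined) / real (\<omega> k (deg undefined))" by simp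
  ultimately show ?thesis by linarith
qed

lemma nrm_le: "(\<And>\<tau>. norm (f \<tau>) \<le> C * real (\<omega> k (deg \<tau>))) \<Longrightarrow> nrm k f \<le> C"
  unfolding linf_norm_def
proof (rule cSUP_least)
  fix \<tau> assume "\<And>\<tau>. norm (f \<tau>) \<le> C * real (\<omega> k (deg \<tau>))"
  thus "norm (f \<tau>) / real (\<omega> k (deg \<tau>)) \<le> C" using om_pos[of k "deg \<tau>"] by (simp add: divide_le_eq)
qed simp

lemma linfI: "(\<And>\<tau>. norm (f \<tau>) \<le> C * real (\<omega> k (deg \<tau>))) \<Longrightarrow> f \<in> linf \<omega> deg k"
  unfolding linf_def by blast

lemma linf_mono: "f \<in> linf \<omega> deg k \<Longrightarrow> k \<le> k' \<Longrightarrow> f \<in> linf \<omega> deg k' \<and> nrm k' f \<le> nrm k f"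
proof -
  assume f: "f \<in> linf \<omega> deg k" and kk: "k \<le> k'"
  have b: "norm (f \<tau>) \<le> nrm k f * real (\<omega> k' (deg \<tau>))" for \<tau>
  proof -
    have "norm (f \<tau>) \<le> nrm k f * real (\<omega> k (deg \<tau>))" by (rule nrm_bound[OF f])
    also have "\<dots> \<le> nrm k f * real (\<omega> k' (deg \<tau>))"
      using om_mono[OF kk] nrm_nonneg[OF f] by (intro mult_left_mono) auto
    finally show ?thesis .
  qed
  show ?thesis using linfI[OF b] nrm_le[OF b] by blast
qed

lemma linf_add: "f \<in> linf \<omega> deg k \<Longrightarrow> g \<in> linf \<omega> deg k \<Longrightarrow>
   (\<lambda>\<tau>. f \<tau> + g \<tau>) \<in> linf \<omega> deg k \<and> nrm k (\<lambda>\<tau>. f \<tau> + g \<tau>) \<le> nrm k f + nrm k g"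
proof -
  assume f: "f \<in> linf \<omega> deg k" and g: "g \<in> linf \<omega> deg k"
  have b: "norm (f \<tau> + g \<tau>) \<le> (nrm k f + nrm k g) * real (\<omega> k (deg \<tau>))" for \<tau>
    using norm_triangle_ineq[of "f \<tau>" "g \<tau>"] nrm_bound[OF f, of \<tau>] nrm_bound[OF g, of \<tau>]
    by (simp add: distrib_right)
  show ?thesis using linfI[OF b] nrm_le[OF b] by blast
qed

lemma linf_scale: "f \<in> linf \<omega> deg k \<Longrightarrow>
   (\<lambda>\<tau>. scaleK a (f \<tau>)) \<in> linf \<omega> deg k \<and> nrm k (\<lambda>\<tau>. scaleK a (f \<tau>)) \<le> norm a * nrm k f"
proof -
  assume f: "f \<in> linf \<omega> deg k"
  have b: "norm (scaleK a (f \<tau>)) \<le> (norm a * nrm k f) * real (\<omega> k (deg \<tau>))" for \<tau>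
    using nrm_bound[OF f, of \<tau>] by (simp add: sK_norm mult.assoc mult_left_mono)
  show ?thesis using linfI[OF b] nrm_le[OF b] by blast
qed

lemma linf_zero: "(\<lambda>\<tau>. 0::'b) \<in> linf \<omega> deg k \<and> nrm k (\<lambda>\<tau>. 0) = 0"
proof -
  have b: "norm ((\<lambda>\<tau>. 0::'b) \<tau>) \<le> 0 * real (\<omega> k (deg \<tau>))" for \<tau> by simp
  show ?thesis using linfI[OF b] nrm_le[OF b] nrm_nonneg[OF linfI[OF b]] by auto
qed

lemma L_iff: "f \<in> L \<longleftrightarrow> (\<exists>k. f \<in> linf \<omega> deg k)"
  unfolding linf_ind_def by blast

lemma L_add: "f \<in> L \<Longrightarrow> g \<in> L \<Longrightarrow> (\<lambda>\<tau>. f \<tau> + g \<tau>) \<in> L"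
proof -
  assume "f \<in> L" "g \<in> L"
  then obtain k1 k2 where "f \<in> linf \<omega> deg k1" "g \<in> linf \<omega> deg k2" by (auto simp: L_iff)
  hence "f \<in> linf \<omega> deg (max k1 k2)" "g \<in> linf \<omega> deg (max k1 k2)" using linf_mono by auto
  thus ?thesis using linf_add L_iff by blast
qed

lemma L_scale: "f \<in> L \<Longrightarrow> (\<lambda>\<tau>. scaleK a (f \<tau>)) \<in> L"
  using linf_scale L_iff by blast

lemma L_zero: "(\<lambda>\<tau>. 0) \<in> L"
  using linf_zero L_iff by blast

lemma scale_m1: "scaleK (-1) x = - x"
proof -
  have "scaleK (-1) x + scaleK 1 x = 0" using sK_add2[of "-1" 1 x] sK_zero2 by simp
  thus ?thesis by (simp add: sK_one eq_neg_iff_add_eq_0)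
qed

lemma L_diff: "f \<in> L \<Longrightarrow> g \<in> L \<Longrightarrow> (\<lambda>\<tau>. f \<tau> - g \<tau>) \<in> L"
  using L_add[OF _ L_scale[of g "-1"]] by (simp add: scale_m1)

lemma L_sum: "(\<And>i. i \<in> I \<Longrightarrow> F i \<in> L) \<Longrightarrow> (\<lambda>\<tau>. \<Sum>i\<in>I. F i \<tau>) \<in> L"
  by (induction I rule: infinite_finite_induct) (auto simp: L_zero intro: L_add)


abbreviation "SN q \<equiv> LB_seminorm \<omega> deg scaleK q"
abbreviation "TT \<equiv> LB_topology \<omega> deg scaleK"

lemma SN_D:
  assumes "SN q"
  shows "\<And>f. f \<in> L \<Longrightarrow> q f \<ge> 0"
    and "\<And>f h. f \<in> L \<Longrightarrow> h \<in> L \<Longrightarrow> q (\<lambda>\<tau>. f \<tau> + h \<tau>) \<le> q f + q h"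
    and "\<And>a f. f \<in> L \<Longrightarrow> q (\<lambda>\<tau>. scaleK a (f \<tau>)) = norm a * q f"
    and "\<And>k. \<exists>C. \<forall>f\<in>linf \<omega> deg k. q f \<le> C * nrm k f"
  using assms unfolding LB_seminorm_def by blast+

lemma SN_zero: "SN q \<Longrightarrow> q (\<lambda>\<tau>. 0) = 0"
  using SN_D(3)[of q "\<lambda>\<tau>. 0" 0] L_zero by (simp add: sK_zero2)

lemma SN_neg: "SN q \<Longrightarrow> f \<in> L \<Longrightarrow> q (\<lambda>\<tau>. - f \<tau>) = q f"
  using SN_D(3)[of q f "-1"] by (simp add: scale_m1)

lemma SN_sum: "SN q \<Longrightarrow> (\<And>i. i \<in> I \<Longrightarrow> G i \<in> L) \<Longrightarrow> q (\<lambda>\<tau>. \<Sum>i\<in>I. G i \<tau>) \<le> (\<Sum>i\<in>I. q (G i))"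
proof (induction I rule: infinite_finite_induct)
  case (infinite A) thus ?case using SN_zero[OF infinite.prems(1)] by simp
next
  case empty thus ?case using SN_zero[OF empty.prems(1)] by simp
next
  case (insert x A)
  have e: "(\<lambda>\<tau>. \<Sum>i\<in>insert x A. G i \<tau>) = (\<lambda>\<tau>. G x \<tau> + (\<Sum>i\<in>A. G i \<tau>))"
    using insert(1,2) by simp
  have "q (\<lambda>\<tau>. G x \<tau> + (\<Sum>i\<in>A. G i \<tau>)) \<le> q (G x) + q (\<lambda>\<tau>. \<Sum>i\<in>A. G i \<tau>)"
    using SN_D(2)[OF insert(4), of "G x" "\<lambda>\<tau>. \<Sum>i\<in>A. G i \<tau>"] L_sum[of A G] insert(5) by simp
  also have "\<dots> \<le> q (G x) + (\<Sum>i\<in>A. q (G i))" using insert(3,4,5) by simp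
  finally show ?case using e insert(1,2) by simp
qed

lemma SN_comb: "SN q1 \<Longrightarrow> SN q2 \<Longrightarrow> a \<ge> 0 \<Longrightarrow> b \<ge> 0 \<Longrightarrow> SN (\<lambda>h. a * q1 h + b * q2 h)"
proof -
  assume q1: "SN q1" and q2: "SN q2" and ab: "a \<ge> 0" "b \<ge> 0"
  show ?thesis unfolding LB_seminorm_def
  proof (intro conjI ballI allI)
    fix f assume "f \<in> L" thus "0 \<le> a * q1 f + b * q2 f" using SN_D(1)[OF q1] SN_D(1)[OF q2] ab by simp
  next
    fix f h assume "f \<in> L" "h \<in> L"
    then show "a * q1 (\<lambda>\<tau>. f \<tau> + h \<tau>) + b * q2 (\<lambda>\<tau>. f \<tau> + h \<tau>) \<le> a * q1 f + b * q2 f + (a * q1 h + b * q2 h)"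
    proof -
      assume fh: "f \<in> L" "h \<in> L"
      have "a * q1 (\<lambda>\<tau>. f \<tau> + h \<tau>) \<le> a * (q1 f + q1 h)"
        using SN_D(2)[OF q1 fh] ab by (intro mult_left_mono) auto
      moreover have "b * q2 (\<lambda>\<tau>. f \<tau> + h \<tau>) \<le> b * (q2 f + q2 h)"
        using SN_D(2)[OF q2 fh] ab by (intro mult_left_mono) auto
      ultimately show ?thesis by (simp add: algebra_simps)
    qed
  next
    fix c f assume "f \<in> L"
    thus "a * q1 (\<lambda>\<tau>. scaleK c (f \<tau>)) + b * q2 (\<lambda>\<tau>. scaleK c (f \<tau>)) = norm c * (a * q1 f + b * q2 f)"
      using SN_D(3)[OF q1, of f c] SN_D(3)[OF q2, of f c] by (simp add: algebra_simps)
  next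
    fix k
    obtain C1 where C1: "\<forall>f\<in>linf \<omega> deg k. q1 f \<le> C1 * nrm k f" using SN_D(4)[OF q1] by blast
    obtain C2 where C2: "\<forall>f\<in>linf \<omega> deg k. q2 f \<le> C2 * nrm k f" using SN_D(4)[OF q2] by blast
    show "\<exists>C. \<forall>f\<in>linf \<omega> deg k. a * q1 f + b * q2 f \<le> C * nrm k f"
    proof (intro exI ballI)
      fix f :: "'j \<Rightarrow> 'b" assume f: "f \<in> linf \<omega> deg k"
      have "a * q1 f \<le> a * (C1 * nrm k f)" using C1 f ab by (simp add: mult_left_mono)
      moreover have "b * q2 f \<le> b * (C2 * nrm k f)" using C2 f ab by (simp add: mult_left_mono)
      ultimately show "a * q1 f + b * q2 f \<le> (a * C1 + b * C2) * nrm k f" by (simp add: algebra_simps)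
    qed
  qed
qed

lemma SN_0: "SN (\<lambda>h. 0)"
  unfolding LB_seminorm_def by (auto intro!: exI[of _ 0])

definition "OP U \<longleftrightarrow> U \<subseteq> L \<and> (\<forall>f\<in>U. \<exists>q e. SN q \<and> e > 0 \<and> {h\<in>L. q (\<lambda>\<tau>. h \<tau> - f \<tau>) < e} \<subseteq> U)"

lemma istop: "istopology OP"
  unfolding istopology_def
proof (intro conjI allI impI)
  fix S T assume S: "OP S" and T: "OP T"
  show "OP (S \<inter> T)" unfolding OP_def
  proof (intro conjI ballI)
    show "S \<inter> T \<subseteq> L" using S unfolding OP_def by blast
    fix f assume f: "f \<in> S \<inter> T"
    obtain q1 e1 where 1: "SN q1" "e1 > 0" "{h\<in>L. q1 (\<lambda>\<tau>. h \<tau> - f \<tau>) < e1} \<subseteq> S"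
      using S f unfolding OP_def by blast
    obtain q2 e2 where 2: "SN q2" "e2 > 0" "{h\<in>L. q2 (\<lambda>\<tau>. h \<tau> - f \<tau>) < e2} \<subseteq> T"
      using T f unfolding OP_def by blast
    have fL: "f \<in> L" using f S unfolding OP_def by blast
    show "\<exists>q e. SN q \<and> 0 < e \<and> {h \<in> L. q (\<lambda>\<tau>. h \<tau> - f \<tau>) < e} \<subseteq> S \<inter> T"
    proof (intro exI conjI)
      show "SN (\<lambda>h. (1/e1) * q1 h + (1/e2) * q2 h)" using SN_comb[OF 1(1) 2(1), of "1/e1" "1/e2"] 1 2 by simp
      show "{h \<in> L. (1/e1) * q1 (\<lambda>\<tau>. h \<tau> - f \<tau>) + (1/e2) * q2 (\<lambda>\<tau>. h \<tau> - f \<tau>) < 1} \<subseteq> S \<inter> T"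
      proof safe
        fix h assume h: "h \<in> L" and lt: "(1/e1) * q1 (\<lambda>\<tau>. h \<tau> - f \<tau>) + (1/e2) * q2 (\<lambda>\<tau>. h \<tau> - f \<tau>) < 1"
        have dL: "(\<lambda>\<tau>. h \<tau> - f \<tau>) \<in> L" using L_diff h fL by blast
        have a: "q1 (\<lambda>\<tau>. h \<tau> - f \<tau>) \<ge> 0" "q2 (\<lambda>\<tau>. h \<tau> - f \<tau>) \<ge> 0"
          using SN_D(1)[OF 1(1) dL] SN_D(1)[OF 2(1) dL] by auto
        have a2: "(1/e2) * q2 (\<lambda>\<tau>. h \<tau> - f \<tau>) \<ge> 0" "(1/e1) * q1 (\<lambda>\<tau>. h \<tau> - f \<tau>) \<ge> 0"
          using a 1(2) 2(2) by auto
        have "(1/e1) * q1 (\<lambda>\<tau>. h \<tau> - f \<tau>) < 1" using lt a2 by linarith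
        hence "q1 (\<lambda>\<tau>. h \<tau> - f \<tau>) < e1" using 1(2) by (simp add: field_simps)
        thus "h \<in> S" using 1(3) h by blast
        have "(1/e2) * q2 (\<lambda>\<tau>. h \<tau> - f \<tau>) < 1" using lt a2 by linarith
        hence "q2 (\<lambda>\<tau>. h \<tau> - f \<tau>) < e2" using 2(2) by (simp add: field_simps)
        thus "h \<in> T" using 2(3) h by blast
      qed
    qed simp
  qed
next
  fix K assume K: "\<forall>K\<in>K. OP K"
  show "OP (\<Union>K)" unfolding OP_def
  proof (intro conjI ballI)
    show "\<Union>K \<subseteq> L" using K unfolding OP_def by auto
    fix f assume "f \<in> \<Union>K"
    then obtain K0 where K0: "K0 \<in> K" "f \<in> K0" by auto
    then obtain q e where "SN q" "e > 0" "{h\<in>L. q (\<lambda>\<tau>. h \<tau> - f \<tau>) < e} \<subseteq> K0"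
      using K unfolding OP_def by meson
    thus "\<exists>q e. SN q \<and> 0 < e \<and> {h\<in>L. q (\<lambda>\<tau>. h \<tau> - f \<tau>) < e} \<subseteq> \<Union>K" using K0 by blast
  qed
qed

lemma TT_eq: "TT = topology OP"
  unfolding LB_topology_def OP_def ..

lemma openin_TT: "openin TT U \<longleftrightarrow> OP U"
  unfolding TT_eq using istop by simp

lemma OP_L: "OP L"
  unfolding OP_def using SN_0 by (intro conjI ballI exI[of _ "\<lambda>h. 0"] exI[of _ 1]) auto

lemma topspace_TT: "topspace TT = L"
proof -
  have "topspace TT = \<Union>{U. OP U}" unfolding topspace_def openin_TT ..
  also have "\<dots> = L" using OP_L unfolding OP_def by blast
  finally show ?thesis .
qed

lemma ball_open: "SN q \<Longrightarrow> f \<in> L \<Longrightarrow> openin TT {h\<in>L. q (\<lambda>\<tau>. h \<tau> - f \<tau>) < e}"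
  unfolding openin_TT OP_def
proof (intro conjI ballI)
  assume q: "SN q" and fL: "f \<in> L"
  fix g assume g: "g \<in> {h\<in>L. q (\<lambda>\<tau>. h \<tau> - f \<tau>) < e}"
  show "\<exists>q' e'. SN q' \<and> 0 < e' \<and> {h\<in>L. q' (\<lambda>\<tau>. h \<tau> - g \<tau>) < e'} \<subseteq> {h\<in>L. q (\<lambda>\<tau>. h \<tau> - f \<tau>) < e}"
  proof (intro exI conjI)
    show "SN q" by fact
    show "0 < e - q (\<lambda>\<tau>. g \<tau> - f \<tau>)" using g by simp
    show "{h\<in>L. q (\<lambda>\<tau>. h \<tau> - g \<tau>) < e - q (\<lambda>\<tau>. g \<tau> - f \<tau>)} \<subseteq> {h\<in>L. q (\<lambda>\<tau>. h \<tau> - f \<tau>) < e}"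
    proof safe
      fix h assume h: "h \<in> L" and lt: "q (\<lambda>\<tau>. h \<tau> - g \<tau>) < e - q (\<lambda>\<tau>. g \<tau> - f \<tau>)"
      have "(\<lambda>\<tau>. h \<tau> - f \<tau>) = (\<lambda>\<tau>. (h \<tau> - g \<tau>) + (g \<tau> - f \<tau>))" by simp
      hence "q (\<lambda>\<tau>. h \<tau> - f \<tau>) \<le> q (\<lambda>\<tau>. h \<tau> - g \<tau>) + q (\<lambda>\<tau>. g \<tau> - f \<tau>)"
        using SN_D(2)[OF q, of "\<lambda>\<tau>. h \<tau> - g \<tau>" "\<lambda>\<tau>. g \<tau> - f \<tau>"] L_diff h g fL by auto
      thus "q (\<lambda>\<tau>. h \<tau> - f \<tau>) < e" using lt by simp
    qed
  qed
qed auto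


lemma cont_crit:
  assumes F: "\<And>x. x \<in> topspace X \<Longrightarrow> F x \<in> L"
    and N: "\<And>x q e. x \<in> topspace X \<Longrightarrow> SN q \<Longrightarrow> e > 0 \<Longrightarrow>
              \<exists>V. openin X V \<and> x \<in> V \<and> (\<forall>y\<in>V. q (\<lambda>\<tau>. F y \<tau> - F x \<tau>) < e)"
  shows "continuous_map X TT F"
  unfolding continuous_map topspace_TT
proof (intro conjI allI impI)
  show "F ` topspace X \<subseteq> L" using F by auto
  fix U assume "openin TT U"
  hence U: "OP U" by (simp add: openin_TT)
  show "openin X {x \<in> topspace X. F x \<in> U}"
  proof (subst openin_subopen, intro ballI)
    fix x assume x: "x \<in> {x \<in> topspace X. F x \<in> U}"
    then obtain q e where qe: "SN q" "e > 0" "{h\<in>L. q (\<lambda>\<tau>. h \<tau> - F x \<tau>) < e} \<subseteq> U"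
      using U unfolding OP_def by blast
    obtain V where V: "openin X V" "x \<in> V" "\<forall>y\<in>V. q (\<lambda>\<tau>. F y \<tau> - F x \<tau>) < e"
      using N[of x q e] x qe by blast
    have "V \<subseteq> {x \<in> topspace X. F x \<in> U}"
    proof
      fix y assume y: "y \<in> V"
      hence yt: "y \<in> topspace X" using openin_subset[OF V(1)] by blast
      hence "F y \<in> {h\<in>L. q (\<lambda>\<tau>. h \<tau> - F x \<tau>) < e}" using F V(3) y by blast
      thus "y \<in> {x \<in> topspace X. F x \<in> U}" using qe(3) yt by blast
    qed
    thus "\<exists>T. openin X T \<and> x \<in> T \<and> T \<subseteq> {x \<in> topspace X. F x \<in> U}" using V by blast
  qed
qed

lemma SN_diff_swap: "SN q \<Longrightarrow> f \<in> L \<Longrightarrow> g \<in> L \<Longrightarrow> q (\<lambda>\<tau>. f \<tau> - g \<tau>) = q (\<lambda>\<tau>. g \<tau> - f \<tau>)"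
  using SN_neg[of q "\<lambda>\<tau>. g \<tau> - f \<tau>"] L_diff by simp

lemma cont_add: "continuous_map (prod_topology TT TT) TT (\<lambda>(\<phi>, \<psi>). (\<lambda>\<mu>. \<phi> \<mu> + \<psi> \<mu>))"
proof (rule cont_crit)
  fix x assume "x \<in> topspace (prod_topology TT TT)"
  then obtain \<phi>0 \<psi>0 where x: "x = (\<phi>0, \<psi>0)" "\<phi>0 \<in> L" "\<psi>0 \<in> L" by (auto simp: topspace_TT)
  thus "(case x of (\<phi>, \<psi>) \<Rightarrow> \<lambda>\<mu>. \<phi> \<mu> + \<psi> \<mu>) \<in> L" using L_add by simp
  fix q and e :: real assume q: "SN q" and e: "e > 0"
  let ?V = "{h\<in>L. q (\<lambda>\<tau>. h \<tau> - \<phi>0 \<tau>) < e/2} \<times> {h\<in>L. q (\<lambda>\<tau>. h \<tau> - \<psi>0 \<tau>) < e/2}"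
  show "\<exists>V. openin (prod_topology TT TT) V \<and> x \<in> V \<and>
          (\<forall>y\<in>V. q (\<lambda>\<tau>. (case y of (\<phi>, \<psi>) \<Rightarrow> \<lambda>\<mu>. \<phi> \<mu> + \<psi> \<mu>) \<tau> - (case x of (\<phi>, \<psi>) \<Rightarrow> \<lambda>\<mu>. \<phi> \<mu> + \<psi> \<mu>) \<tau>) < e)"
  proof (intro exI conjI ballI)
    show "openin (prod_topology TT TT) ?V"
      by (rule openin_prod_Times_iff[THEN iffD2], intro disjI2 conjI ball_open q x)
    show "x \<in> ?V" using x e SN_zero[OF q] by simp
    fix y assume "y \<in> ?V"
    then obtain \<phi> \<psi> where y: "y = (\<phi>, \<psi>)" "\<phi> \<in> L" "\<psi> \<in> L" "q (\<lambda>\<tau>. \<phi> \<tau> - \<phi>0 \<tau>) < e/2" "q (\<lambda>\<tau>. \<psi> \<tau> - \<psi>0 \<tau>) < e/2"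
      by auto
    have eq: "(\<lambda>\<tau>. (\<phi> \<tau> + \<psi> \<tau>) - (\<phi>0 \<tau> + \<psi>0 \<tau>)) = (\<lambda>\<tau>. (\<phi> \<tau> - \<phi>0 \<tau>) + (\<psi> \<tau> - \<psi>0 \<tau>))"
      by (simp add: algebra_simps)
    have "q (\<lambda>\<tau>. (\<phi> \<tau> + \<psi> \<tau>) - (\<phi>0 \<tau> + \<psi>0 \<tau>)) \<le> q (\<lambda>\<tau>. \<phi> \<tau> - \<phi>0 \<tau>) + q (\<lambda>\<tau>. \<psi> \<tau> - \<psi>0 \<tau>)"
      unfolding eq by (rule SN_D(2)[OF q]) (use L_diff x y in auto)
    thus "q (\<lambda>\<tau>. (case y of (\<phi>, \<psi>) \<Rightarrow> \<lambda>\<mu>. \<phi> \<mu> + \<psi> \<mu>) \<tau> - (case x of (\<phi>, \<psi>) \<Rightarrow> \<lambda>\<mu>. \<phi> \<mu> + \<psi> \<mu>) \<tau>) < e"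
      using x y by simp
  qed
qed

end


context LBset begin
lemma cont_scale: "continuous_map (prod_topology (euclidean :: 'k topology) TT) TT (\<lambda>(a, \<phi>). (\<lambda>\<mu>. scaleK a (\<phi> \<mu>)))"
proof (rule cont_crit)
  fix x assume "x \<in> topspace (prod_topology (euclidean :: 'k topology) TT)"
  then obtain a0 \<phi>0 where x: "x = (a0, \<phi>0)" "\<phi>0 \<in> L" by (auto simp: topspace_TT)
  thus "(case x of (a, \<phi>) \<Rightarrow> \<lambda>\<mu>. scaleK a (\<phi> \<mu>)) \<in> L" using L_scale by simp
  fix q and e :: real assume q: "SN q" and e: "e > 0"
  define \<eta> where "\<eta> = e / (2 * (norm a0 + 1))"
  define \<delta> where "\<delta> = min 1 (e / (2 * (q \<phi>0 + 1)))"
  have q0: "q \<phi>0 \<ge> 0" using SN_D(1)[OF q x(2)] .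
  have n1: "norm a0 + 1 > 0" by (smt (verit) norm_ge_zero)
  have \<eta>: "\<eta> > 0" unfolding \<eta>_def using e n1 by (intro divide_pos_pos) auto
  have \<delta>: "\<delta> > 0" "\<delta> \<le> 1" "\<delta> * q \<phi>0 \<le> e/2"
  proof -
    have p: "q \<phi>0 + 1 > 0" using q0 by simp
    show "\<delta> > 0" "\<delta> \<le> 1" unfolding \<delta>_def using e p by auto
    have "\<delta> * q \<phi>0 \<le> (e / (2 * (q \<phi>0 + 1))) * (q \<phi>0 + 1)"
      unfolding \<delta>_def using q0 e p by (intro mult_mono) auto
    also have "\<dots> = e/2" using p by (rule aux_div)
    finally show "\<delta> * q \<phi>0 \<le> e/2" .
  qed
  let ?V = "ball a0 \<delta> \<times> {h\<in>L. q (\<lambda>\<tau>. h \<tau> - \<phi>0 \<tau>) < \<eta>}"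
  show "\<exists>V. openin (prod_topology euclidean TT) V \<and> x \<in> V \<and>
          (\<forall>y\<in>V. q (\<lambda>\<tau>. (case y of (a, \<phi>) \<Rightarrow> \<lambda>\<mu>. scaleK a (\<phi> \<mu>)) \<tau> - (case x of (a, \<phi>) \<Rightarrow> \<lambda>\<mu>. scaleK a (\<phi> \<mu>)) \<tau>) < e)"
  proof (intro exI conjI ballI)
    show "openin (prod_topology euclidean TT) ?V"
    proof (rule openin_prod_Times_iff[THEN iffD2], rule disjI2, rule disjI2, rule conjI)
      show "openin euclidean (ball a0 \<delta>)" by simp
      show "openin TT {h\<in>L. q (\<lambda>\<tau>. h \<tau> - \<phi>0 \<tau>) < \<eta>}" by (rule ball_open[OF q x(2)])
    qed
    show "x \<in> ?V" using x \<eta> \<delta> SN_zero[OF q] by simp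
    fix y assume "y \<in> ?V"
    then obtain a \<phi> where y: "y = (a, \<phi>)" "\<phi> \<in> L" "norm (a - a0) < \<delta>" "q (\<lambda>\<tau>. \<phi> \<tau> - \<phi>0 \<tau>) < \<eta>"
      by (auto simp: dist_norm norm_minus_commute)
    have eq: "(\<lambda>\<tau>. scaleK a (\<phi> \<tau>) - scaleK a0 (\<phi>0 \<tau>)) = (\<lambda>\<tau>. scaleK a (\<phi> \<tau> - \<phi>0 \<tau>) + scaleK (a - a0) (\<phi>0 \<tau>))"
      by (simp add: sK_diff sK_diff2)
    have d: "(\<lambda>\<tau>. \<phi> \<tau> - \<phi>0 \<tau>) \<in> L" using L_diff y x by auto
    have "q (\<lambda>\<tau>. scaleK a (\<phi> \<tau>) - scaleK a0 (\<phi>0 \<tau>)) \<le> q (\<lambda>\<tau>. scaleK a (\<phi> \<tau> - \<phi>0 \<tau>)) + q (\<lambda>\<tau>. scaleK (a - a0) (\<phi>0 \<tau>))"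
      unfolding eq by (rule SN_D(2)[OF q]) (use L_scale d x in auto)
    also have "\<dots> = norm a * q (\<lambda>\<tau>. \<phi> \<tau> - \<phi>0 \<tau>) + norm (a - a0) * q \<phi>0"
      using SN_D(3)[OF q d] SN_D(3)[OF q x(2)] by simp
    also have "\<dots> < (norm a0 + 1) * \<eta> + \<delta> * q \<phi>0"
    proof (rule add_less_le_mono)
      have "norm a \<le> norm a0 + 1" using y(3) \<delta>(2) norm_triangle_ineq2[of a a0] by linarith
      hence "norm a * q (\<lambda>\<tau>. \<phi> \<tau> - \<phi>0 \<tau>) \<le> (norm a0 + 1) * q (\<lambda>\<tau>. \<phi> \<tau> - \<phi>0 \<tau>)"
        using SN_D(1)[OF q d] by (intro mult_right_mono) auto
      also have "\<dots> < (norm a0 + 1) * \<eta>" using y(4) n1 by (intro mult_strict_left_mono) auto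
      finally show "norm a * q (\<lambda>\<tau>. \<phi> \<tau> - \<phi>0 \<tau>) < (norm a0 + 1) * \<eta>" .
      show "norm (a - a0) * q \<phi>0 \<le> \<delta> * q \<phi>0" using y(3) q0 by (intro mult_right_mono) auto
    qed
    also have "(norm a0 + 1) * \<eta> = e/2" unfolding \<eta>_def using aux_div[OF n1, of e] by (simp only: mult.commute)
    finally have "q (\<lambda>\<tau>. scaleK a (\<phi> \<tau>) - scaleK a0 (\<phi>0 \<tau>)) < e" using \<delta>(3) e by linarith
    thus "q (\<lambda>\<tau>. (case y of (a, \<phi>) \<Rightarrow> \<lambda>\<mu>. scaleK a (\<phi> \<mu>)) \<tau> - (case x of (a, \<phi>) \<Rightarrow> \<lambda>\<mu>. scaleK a (\<phi> \<mu>)) \<tau>) < e"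
      using x y by simp
  qed
qed

end

lemma infsum_fin:
  fixes f :: "'a \<Rightarrow> real"
  assumes "finite F" "\<And>x. x \<notin> F \<Longrightarrow> f x = 0"
  shows "f summable_on UNIV \<and> infsum f UNIV = sum f F"
proof
  have "f summable_on UNIV \<longleftrightarrow> f summable_on F"
    by (rule summable_on_cong_neutral) (use assms in auto)
  thus "f summable_on UNIV" using assms by simp
  have "infsum f UNIV = infsum f F"
    by (rule infsum_cong_neutral) (use assms in auto)
  thus "infsum f UNIV = sum f F" using assms by simp
qed

lemma Inf_mult_bound:
  fixes S :: "real set"
  assumes "S \<noteq> {}" "\<And>v. v \<in> S \<Longrightarrow> v \<ge> 0" "c \<ge> 0" "\<And>v. v \<in> S \<Longrightarrow> x \<le> c * v"
  shows "x \<le> c * Inf S"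
proof (cases "c = 0")
  case True
  then obtain v where "v \<in> S" using assms(1) by blast
  thus ?thesis using assms(4) True by fastforce
next
  case False
  hence c: "c > 0" using assms(3) by simp
  have "x / c \<le> Inf S"
    by (rule cInf_greatest[OF assms(1)]) (use assms(4) c in \<open>simp add: divide_le_eq mult.commute\<close>)
  thus ?thesis using c by (simp add: divide_le_eq mult.commute)
qed

locale LBconv = LBset scaleK \<omega> deg
  for scaleK :: "'k::real_normed_field \<Rightarrow> 'b::{banach,real_normed_algebra_1,comm_ring_1} \<Rightarrow> 'b"
    and \<omega> :: "nat \<Rightarrow> nat \<Rightarrow> nat" and deg :: "'m \<Rightarrow> nat" +
  fixes \<Delta> :: "'m \<Rightarrow> 'm \<times> 'm \<Rightarrow> 'k"
  assumes fin: "\<And>\<mu>. finite (supp (\<Delta> \<mu>))"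
    and ext: "extends_continuously \<omega> deg (\<lambda>p. deg (fst p) + deg (snd p)) \<Delta>"
begin

abbreviation "conv \<equiv> convolution \<Delta> scaleK"

lemma conv_sum_l: "conv (\<lambda>\<tau>. \<Sum>i\<in>I. F i \<tau>) h = (\<lambda>\<mu>. \<Sum>i\<in>I. conv (F i) h \<mu>)"
  unfolding convolution_def
  by (simp add: sum_distrib_right sK_sum sum.swap[of _ I])

lemma conv_sum_r: "conv h (\<lambda>\<tau>. \<Sum>i\<in>I. F i \<tau>) = (\<lambda>\<mu>. \<Sum>i\<in>I. conv h (F i) \<mu>)"
  unfolding convolution_def
  by (simp add: sum_distrib_left sK_sum sum.swap[of _ I])

lemma conv_add_l: "conv (\<lambda>\<tau>. f \<tau> + g \<tau>) h = (\<lambda>\<mu>. conv f h \<mu> + conv g h \<mu>)"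
  unfolding convolution_def by (simp add: distrib_right sK_add sum.distrib)

lemma conv_add_r: "conv h (\<lambda>\<tau>. f \<tau> + g \<tau>) = (\<lambda>\<mu>. conv h f \<mu> + conv h g \<mu>)"
  unfolding convolution_def by (simp add: distrib_left sK_add sum.distrib)

lemma conv_diff_l: "conv (\<lambda>\<tau>. f \<tau> - g \<tau>) h = (\<lambda>\<mu>. conv f h \<mu> - conv g h \<mu>)"
  unfolding convolution_def by (simp add: left_diff_distrib sK_diff sum_subtractf)

lemma conv_diff_r: "conv h (\<lambda>\<tau>. f \<tau> - g \<tau>) = (\<lambda>\<mu>. conv h f \<mu> - conv h g \<mu>)"
  unfolding convolution_def by (simp add: right_diff_distrib sK_diff sum_subtractf)

lemma conv_scale_l: "conv (\<lambda>\<tau>. scaleK a (f \<tau>)) h = (\<lambda>\<mu>. scaleK a (conv f h \<mu>))"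
  unfolding convolution_def by (simp add: sK_mult[symmetric] sK_sum sK_comm)

lemma conv_scale_r: "conv h (\<lambda>\<tau>. scaleK a (f \<tau>)) = (\<lambda>\<mu>. scaleK a (conv h f \<mu>))"
  unfolding convolution_def by (simp add: sK_mult2[symmetric] sK_sum sK_comm)

definition "e1 \<mu> = (\<lambda>x. if x = \<mu> then (1::'k) else 0)"

lemma e1_l1: "e1 \<mu> \<in> l1_proj \<omega> deg \<and> l1_norm \<omega> deg k (e1 \<mu>) = real (\<omega> k (deg \<mu>))"
proof -
  have *: "(\<lambda>\<tau>. norm (e1 \<mu> \<tau>) * real (\<omega> k (deg \<tau>))) summable_on UNIV \<and>
     infsum (\<lambda>\<tau>. norm (e1 \<mu> \<tau>) * real (\<omega> k (deg \<tau>))) UNIV = (\<Sum>\<tau>\<in>{\<mu>}. norm (e1 \<mu> \<tau>) * real (\<omega> k (deg \<tau>)))" for k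
    by (rule infsum_fin) (auto simp: e1_def)
  show ?thesis unfolding l1_proj_def in_l1_def l1_norm_def using * by (simp add: e1_def)
qed

lemma Delta_bound: "\<exists>K Cst. \<forall>k. Cst k > 0 \<and> (\<forall>\<mu>. (\<Sum>p\<in>supp (\<Delta> \<mu>). norm (\<Delta> \<mu> p) * real (\<omega> k (deg (fst p) + deg (snd p))))
    \<le> Cst k * real (\<omega> (K k) (deg \<mu>)))"
proof -
  obtain D :: "('m \<Rightarrow> 'k) \<Rightarrow> ('m \<times> 'm \<Rightarrow> 'k)" where
    D: "\<forall>\<mu>. D (\<lambda>x. if x = \<mu> then 1 else 0) = \<Delta> \<mu>"
       "\<forall>k. \<exists>k' C. \<forall>c\<in>l1_proj \<omega> deg. l1_norm \<omega> (\<lambda>p. deg (fst p) + deg (snd p)) k (D c) \<le> C * l1_norm \<omega> deg k' c"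
    using ext unfolding extends_continuously_def by blast
  obtain K C where KC: "\<forall>k. \<forall>c\<in>l1_proj \<omega> deg. l1_norm \<omega> (\<lambda>p. deg (fst p) + deg (snd p)) k (D c) \<le> C k * l1_norm \<omega> deg (K k) c"
    using D(2) by metis
  show ?thesis
  proof (intro exI[of _ K] exI[of _ "\<lambda>k. max (C k) 1"] allI conjI)
    fix k \<mu>
    show "max (C k) 1 > 0" by simp
    have le: "l1_norm \<omega> (\<lambda>p. deg (fst p) + deg (snd p)) k (\<Delta> \<mu>) \<le> C k * real (\<omega> (K k) (deg \<mu>))"
      using KC e1_l1[of \<mu>] D(1) unfolding e1_def by metis
    have "l1_norm \<omega> (\<lambda>p. deg (fst p) + deg (snd p)) k (\<Delta> \<mu>) =
       (\<Sum>p\<in>supp (\<Delta> \<mu>). norm (\<Delta> \<mu> p) * real (\<omega> k (deg (fst p) + deg (snd p))))"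
      unfolding l1_norm_def by (rule conjunct2[OF infsum_fin]) (use fin[of \<mu>] in \<open>auto simp: supp_def\<close>)
    moreover have "C k * real (\<omega> (K k) (deg \<mu>)) \<le> max (C k) 1 * real (\<omega> (K k) (deg \<mu>))"
      by (intro mult_right_mono) auto
    ultimately show "(\<Sum>p\<in>supp (\<Delta> \<mu>). norm (\<Delta> \<mu> p) * real (\<omega> k (deg (fst p) + deg (snd p))))
       \<le> max (C k) 1 * real (\<omega> (K k) (deg \<mu>))" using le by linarith
  qed
qed


lemma conv_linf_ex: "\<exists>K Cst. (\<forall>k. Cst k > 0) \<and> (\<forall>k \<phi> \<psi>. \<phi> \<in> linf \<omega> deg k \<longrightarrow> \<psi> \<in> linf \<omega> deg k \<longrightarrow>
   conv \<phi> \<psi> \<in> linf \<omega> deg (K k) \<and> nrm (K k) (conv \<phi> \<psi>) \<le> Cst k * (nrm k \<phi> * nrm k \<psi>))"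
proof -
  obtain K Cst where KC: "\<And>k. Cst k > 0" "\<And>k \<mu>. (\<Sum>p\<in>supp (\<Delta> \<mu>). norm (\<Delta> \<mu> p) * real (\<omega> k (deg (fst p) + deg (snd p))))
    \<le> Cst k * real (\<omega> (K k) (deg \<mu>))" using Delta_bound by blast
  have main: "conv \<phi> \<psi> \<in> linf \<omega> deg (K k) \<and> nrm (K k) (conv \<phi> \<psi>) \<le> Cst k * (nrm k \<phi> * nrm k \<psi>)"
    if \<phi>: "\<phi> \<in> linf \<omega> deg k" and \<psi>: "\<psi> \<in> linf \<omega> deg k" for k \<phi> \<psi>
  proof -
    define a where "a = nrm k \<phi>"
    define b where "b = nrm k \<psi>"
    have a: "a \<ge> 0" and b: "b \<ge> 0" unfolding a_def b_def using nrm_nonneg \<phi> \<psi> by auto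
    have bnd: "norm (conv \<phi> \<psi> \<mu>) \<le> (Cst k * (a * b)) * real (\<omega> (K k) (deg \<mu>))" for \<mu>
    proof -
      have "norm (conv \<phi> \<psi> \<mu>) \<le> (\<Sum>p\<in>supp (\<Delta> \<mu>). norm (scaleK (\<Delta> \<mu> p) (\<phi> (fst p) * \<psi> (snd p))))"
        unfolding convolution_def by (rule norm_sum)
      also have "\<dots> \<le> (\<Sum>p\<in>supp (\<Delta> \<mu>). norm (\<Delta> \<mu> p) * ((a * b) * real (\<omega> k (deg (fst p) + deg (snd p)))))"
      proof (rule sum_mono)
        fix p
        have "norm (\<phi> (fst p) * \<psi> (snd p)) \<le> norm (\<phi> (fst p)) * norm (\<psi> (snd p))" by (rule norm_mult_ineq)
        also have "\<dots> \<le> (a * real (\<omega> k (deg (fst p)))) * (b * real (\<omega> k (deg (snd p))))"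
          using nrm_bound[OF \<phi>] nrm_bound[OF \<psi>] a b unfolding a_def b_def by (intro mult_mono) auto
        also have "\<dots> = (a * b) * (real (\<omega> k (deg (fst p))) * real (\<omega> k (deg (snd p))))" by simp
        also have "\<dots> \<le> (a * b) * real (\<omega> k (deg (fst p) + deg (snd p)))"
        proof (rule mult_left_mono)
          have "\<omega> k (deg (fst p)) * \<omega> k (deg (snd p)) \<le> \<omega> k (deg (fst p) + deg (snd p))" by (rule om_mult)
          thus "real (\<omega> k (deg (fst p))) * real (\<omega> k (deg (snd p))) \<le> real (\<omega> k (deg (fst p) + deg (snd p)))"
            by (metis of_nat_le_iff of_nat_mult)
        qed (use a b in simp)
        finally show "norm (scaleK (\<Delta> \<mu> p) (\<phi> (fst p) * \<psi> (snd p))) \<le> norm (\<Delta> \<mu> p) * ((a * b) * real (\<omega> k (deg (fst p) + deg (snd p))))"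
          by (simp add: sK_norm mult_left_mono)
      qed
      also have "\<dots> = (a * b) * (\<Sum>p\<in>supp (\<Delta> \<mu>). norm (\<Delta> \<mu> p) * real (\<omega> k (deg (fst p) + deg (snd p))))"
        by (simp add: sum_distrib_left algebra_simps)
      also have "\<dots> \<le> (a * b) * (Cst k * real (\<omega> (K k) (deg \<mu>)))"
        using KC(2) a b by (intro mult_left_mono) auto
      finally show ?thesis by (simp add: algebra_simps)
    qed
    show ?thesis using linfI[OF bnd] nrm_le[OF bnd] unfolding a_def b_def by blast
  qed
  show ?thesis using KC(1) main by blast
qed

lemma L_conv: "\<phi> \<in> L \<Longrightarrow> \<psi> \<in> L \<Longrightarrow> conv \<phi> \<psi> \<in> L"
proof -
  assume "\<phi> \<in> L" "\<psi> \<in> L"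
  then obtain k1 k2 where "\<phi> \<in> linf \<omega> deg k1" "\<psi> \<in> linf \<omega> deg k2" by (auto simp: L_iff)
  hence "\<phi> \<in> linf \<omega> deg (max k1 k2)" "\<psi> \<in> linf \<omega> deg (max k1 k2)" using linf_mono by auto
  thus ?thesis using conv_linf_ex L_iff by blast
qed

end


context LBset begin

definition "DS \<epsilon> \<phi> = {(\<Sum>i<N. nrm i (\<Phi> i) / \<epsilon> i) | N \<Phi>. (\<forall>i. \<Phi> i \<in> linf \<omega> deg i) \<and> (\<forall>i\<ge>N. \<Phi> i = (\<lambda>_. 0)) \<and> \<phi> = (\<lambda>\<tau>. \<Sum>i<N. \<Phi> i \<tau>)}"
definition "pn \<epsilon> \<phi> = Inf (DS \<epsilon> \<phi>)"

lemma pad: fixes N M :: nat assumes "\<And>i. i \<ge> N \<Longrightarrow> g i = 0" "N \<le> M" shows "(\<Sum>i<M. g i) = (\<Sum>i<N. g i)"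
proof (rule sum.mono_neutral_right)
  show "\<forall>i\<in>{..<M} - {..<N}. g i = 0" using assms(1) by (simp add: not_less)
qed (use assms(2) in auto)

context
  fixes \<epsilon> :: "nat \<Rightarrow> real"
  assumes epos: "\<And>k. \<epsilon> k > 0"
begin

lemma DS_nonneg: "v \<in> DS \<epsilon> \<phi> \<Longrightarrow> v \<ge> 0"
proof -
  assume "v \<in> DS \<epsilon> \<phi>"
  then obtain N \<Phi> where 1: "v = (\<Sum>i<N. nrm i (\<Phi> i) / \<epsilon> i)" "\<forall>i. \<Phi> i \<in> linf \<omega> deg i"
    unfolding DS_def by blast
  show "v \<ge> 0" unfolding 1(1)
  proof (rule sum_nonneg)
    fix i show "nrm i (\<Phi> i) / \<epsilon> i \<ge> 0" using nrm_nonneg[of "\<Phi> i" i] 1(2) epos[of i] by simp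
  qed
qed

lemma DS_single: "\<phi> \<in> linf \<omega> deg k \<Longrightarrow> nrm k \<phi> / \<epsilon> k \<in> DS \<epsilon> \<phi>"
proof -
  assume \<phi>: "\<phi> \<in> linf \<omega> deg k"
  define \<Phi> where "\<Phi> = (\<lambda>i \<tau>. if i = k then \<phi> \<tau> else (0::'b))"
  have z: "\<Phi> i = (\<lambda>_. 0)" if "i \<noteq> k" for i using that unfolding \<Phi>_def by auto
  have k: "\<Phi> k = \<phi>" unfolding \<Phi>_def by auto
  have "\<Phi> i \<in> linf \<omega> deg i" for i using z[of i] k \<phi> linf_zero by (cases "i = k") auto
  moreover have "\<forall>i\<ge>Suc k. \<Phi> i = (\<lambda>_. 0)" using z by auto
  moreover have "\<phi> = (\<lambda>\<tau>. \<Sum>i<Suc k. \<Phi> i \<tau>)" unfolding \<Phi>_def by simp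
  moreover have "nrm k \<phi> / \<epsilon> k = (\<Sum>i<Suc k. nrm i (\<Phi> i) / \<epsilon> i)"
  proof -
    have "(\<Sum>i<Suc k. nrm i (\<Phi> i) / \<epsilon> i) = (\<Sum>i<Suc k. if i = k then nrm k \<phi> / \<epsilon> k else 0)"
      by (rule sum.cong) (use z k linf_zero in auto)
    thus ?thesis by simp
  qed
  ultimately show ?thesis unfolding DS_def mem_Collect_eq by blast
qed

lemma DS_ne: "\<phi> \<in> L \<Longrightarrow> DS \<epsilon> \<phi> \<noteq> {}"
  using DS_single L_iff by blast

lemma pn_le: "v \<in> DS \<epsilon> \<phi> \<Longrightarrow> pn \<epsilon> \<phi> \<le> v"
  unfolding pn_def by (rule cInf_lower) (auto intro: bdd_belowI[of _ 0] DS_nonneg)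

lemma pn_nonneg: "\<phi> \<in> L \<Longrightarrow> pn \<epsilon> \<phi> \<ge> 0"
  unfolding pn_def by (rule cInf_greatest[OF DS_ne]) (auto intro: DS_nonneg)

lemma pn_bound: "\<phi> \<in> L \<Longrightarrow> (\<And>v. v \<in> DS \<epsilon> \<phi> \<Longrightarrow> x \<le> c * v) \<Longrightarrow> c \<ge> 0 \<Longrightarrow> x \<le> c * pn \<epsilon> \<phi>"
  unfolding pn_def by (rule Inf_mult_bound[OF DS_ne]) (auto intro: DS_nonneg)

lemma DS_add: "v1 \<in> DS \<epsilon> f \<Longrightarrow> v2 \<in> DS \<epsilon> h \<Longrightarrow> \<exists>v\<in>DS \<epsilon> (\<lambda>\<tau>. f \<tau> + h \<tau>). v \<le> v1 + v2"
proof -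
  assume "v1 \<in> DS \<epsilon> f" "v2 \<in> DS \<epsilon> h"
  then obtain N1 \<Phi>1 N2 \<Phi>2 where
    1: "v1 = (\<Sum>i<N1. nrm i (\<Phi>1 i) / \<epsilon> i)" "\<forall>i. \<Phi>1 i \<in> linf \<omega> deg i" "\<forall>i\<ge>N1. \<Phi>1 i = (\<lambda>_. 0)" "f = (\<lambda>\<tau>. \<Sum>i<N1. \<Phi>1 i \<tau>)" and
    2: "v2 = (\<Sum>i<N2. nrm i (\<Phi>2 i) / \<epsilon> i)" "\<forall>i. \<Phi>2 i \<in> linf \<omega> deg i" "\<forall>i\<ge>N2. \<Phi>2 i = (\<lambda>_. 0)" "h = (\<lambda>\<tau>. \<Sum>i<N2. \<Phi>2 i \<tau>)"
    unfolding DS_def by blast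
  define N where "N = max N1 N2"
  define \<Phi> where "\<Phi> i = (\<lambda>\<tau>. \<Phi>1 i \<tau> + \<Phi>2 i \<tau>)" for i
  have s1: "(\<Sum>i<N. G i (\<Phi>1 i)) = (\<Sum>i<N1. G i (\<Phi>1 i))" if "\<And>i. G i (\<lambda>_. 0) = 0" for G :: "nat \<Rightarrow> _ \<Rightarrow> 'z::comm_monoid_add"
    by (rule pad) (use 1(3) that N_def in auto)
  have s2: "(\<Sum>i<N. G i (\<Phi>2 i)) = (\<Sum>i<N2. G i (\<Phi>2 i))" if "\<And>i. G i (\<lambda>_. 0) = 0" for G :: "nat \<Rightarrow> _ \<Rightarrow> 'z::comm_monoid_add"
    by (rule pad) (use 2(3) that N_def in auto)
  have "(\<Sum>i<N. nrm i (\<Phi> i) / \<epsilon> i) \<in> DS \<epsilon> (\<lambda>\<tau>. f \<tau> + h \<tau>)"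
    unfolding DS_def
  proof (intro CollectI exI conjI allI impI)
    show "\<Phi> i \<in> linf \<omega> deg i" for i unfolding \<Phi>_def using linf_add 1(2) 2(2) by blast
    show "\<Phi> i = (\<lambda>_. 0)" if "N \<le> i" for i unfolding \<Phi>_def using that 1(3) 2(3) N_def by auto
    have "(\<Sum>i<N. \<Phi>1 i \<tau>) = (\<Sum>i<N1. \<Phi>1 i \<tau>)" for \<tau> using s1[of "\<lambda>i g. g \<tau>"] by simp
    moreover have "(\<Sum>i<N. \<Phi>2 i \<tau>) = (\<Sum>i<N2. \<Phi>2 i \<tau>)" for \<tau> using s2[of "\<lambda>i g. g \<tau>"] by simp
    ultimately show "(\<lambda>\<tau>. f \<tau> + h \<tau>) = (\<lambda>\<tau>. \<Sum>i<N. \<Phi> i \<tau>)" unfolding \<Phi>_def 1(4) 2(4)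
      by (simp add: sum.distrib)
  qed simp
  moreover have "(\<Sum>i<N. nrm i (\<Phi> i) / \<epsilon> i) \<le> v1 + v2"
  proof -
    have "(\<Sum>i<N. nrm i (\<Phi> i) / \<epsilon> i) \<le> (\<Sum>i<N. nrm i (\<Phi>1 i) / \<epsilon> i + nrm i (\<Phi>2 i) / \<epsilon> i)"
    proof (rule sum_mono)
      fix i
      have "nrm i (\<Phi> i) \<le> nrm i (\<Phi>1 i) + nrm i (\<Phi>2 i)" unfolding \<Phi>_def using linf_add 1(2) 2(2) by blast
      thus "nrm i (\<Phi> i) / \<epsilon> i \<le> nrm i (\<Phi>1 i) / \<epsilon> i + nrm i (\<Phi>2 i) / \<epsilon> i"
        using epos[of i] by (simp add: add_divide_distrib[symmetric] divide_right_mono)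
    qed
    also have "\<dots> = v1 + v2" unfolding sum.distrib 1(1) 2(1)
      using s1[of "\<lambda>i g. nrm i g / \<epsilon> i"] s2[of "\<lambda>i g. nrm i g / \<epsilon> i"] linf_zero by simp
    finally show ?thesis .
  qed
  ultimately show ?thesis by blast
qed

lemma DS_scale: "v \<in> DS \<epsilon> f \<Longrightarrow> \<exists>v'\<in>DS \<epsilon> (\<lambda>\<tau>. scaleK a (f \<tau>)). v' \<le> norm a * v"
proof -
  assume "v \<in> DS \<epsilon> f"
  then obtain N \<Phi> where
    1: "v = (\<Sum>i<N. nrm i (\<Phi> i) / \<epsilon> i)" "\<forall>i. \<Phi> i \<in> linf \<omega> deg i" "\<forall>i\<ge>N. \<Phi> i = (\<lambda>_. 0)" "f = (\<lambda>\<tau>. \<Sum>i<N. \<Phi> i \<tau>)"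
    unfolding DS_def by blast
  define \<Psi> where "\<Psi> i = (\<lambda>\<tau>. scaleK a (\<Phi> i \<tau>))" for i
  have "(\<Sum>i<N. nrm i (\<Psi> i) / \<epsilon> i) \<in> DS \<epsilon> (\<lambda>\<tau>. scaleK a (f \<tau>))"
    unfolding DS_def
  proof (intro CollectI exI conjI allI impI)
    show "\<Psi> i \<in> linf \<omega> deg i" for i unfolding \<Psi>_def using linf_scale 1(2) by blast
    show "\<Psi> i = (\<lambda>_. 0)" if "N \<le> i" for i unfolding \<Psi>_def using that 1(3) by (auto simp: sK_zero)
    show "(\<lambda>\<tau>. scaleK a (f \<tau>)) = (\<lambda>\<tau>. \<Sum>i<N. \<Psi> i \<tau>)" unfolding \<Psi>_def 1(4) by (simp add: sK_sum)
  qed simp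
  moreover have "(\<Sum>i<N. nrm i (\<Psi> i) / \<epsilon> i) \<le> norm a * v"
  proof -
    have "(\<Sum>i<N. nrm i (\<Psi> i) / \<epsilon> i) \<le> (\<Sum>i<N. norm a * (nrm i (\<Phi> i) / \<epsilon> i))"
    proof (rule sum_mono)
      fix i
      have "nrm i (\<Psi> i) \<le> norm a * nrm i (\<Phi> i)" unfolding \<Psi>_def using linf_scale 1(2) by blast
      thus "nrm i (\<Psi> i) / \<epsilon> i \<le> norm a * (nrm i (\<Phi> i) / \<epsilon> i)"
        using epos[of i] by (simp add: divide_right_mono)
    qed
    thus ?thesis unfolding 1(1) by (simp add: sum_distrib_left)
  qed
  ultimately show ?thesis by blast
qed

lemma SN_pn: "SN (pn \<epsilon>)"
  unfolding LB_seminorm_def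
proof (intro conjI ballI allI)
  fix f assume "f \<in> L" thus "pn \<epsilon> f \<ge> 0" by (rule pn_nonneg)
next
  fix f h assume f: "f \<in> L" and h: "h \<in> L"
  have "pn \<epsilon> (\<lambda>\<tau>. f \<tau> + h \<tau>) - v2 \<le> pn \<epsilon> f" if v2: "v2 \<in> DS \<epsilon> h" for v2
  proof -
    have "pn \<epsilon> (\<lambda>\<tau>. f \<tau> + h \<tau>) - v2 \<le> 1 * pn \<epsilon> f"
    proof (rule pn_bound[OF f])
      fix v1 assume "v1 \<in> DS \<epsilon> f"
      then obtain v where "v \<in> DS \<epsilon> (\<lambda>\<tau>. f \<tau> + h \<tau>)" "v \<le> v1 + v2" using DS_add v2 by blast
      thus "pn \<epsilon> (\<lambda>\<tau>. f \<tau> + h \<tau>) - v2 \<le> 1 * v1" using pn_le by fastforce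
    qed simp
    thus ?thesis by simp
  qed
  hence "pn \<epsilon> (\<lambda>\<tau>. f \<tau> + h \<tau>) - pn \<epsilon> f \<le> 1 * pn \<epsilon> h"
    by (intro pn_bound[OF h]) (auto simp: algebra_simps)
  thus "pn \<epsilon> (\<lambda>\<tau>. f \<tau> + h \<tau>) \<le> pn \<epsilon> f + pn \<epsilon> h" by simp
next
  fix a f assume f: "f \<in> L"
  have le: "pn \<epsilon> (\<lambda>\<tau>. scaleK a (g \<tau>)) \<le> norm a * pn \<epsilon> g" if g: "g \<in> L" for a g
  proof (rule pn_bound[OF g])
    fix v assume "v \<in> DS \<epsilon> g"
    then obtain v' where "v' \<in> DS \<epsilon> (\<lambda>\<tau>. scaleK a (g \<tau>))" "v' \<le> norm a * v" using DS_scale by blast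
    thus "pn \<epsilon> (\<lambda>\<tau>. scaleK a (g \<tau>)) \<le> norm a * v" using pn_le by fastforce
  qed simp
  show "pn \<epsilon> (\<lambda>\<tau>. scaleK a (f \<tau>)) = norm a * pn \<epsilon> f"
  proof (cases "a = 0")
    case True
    have "pn \<epsilon> (\<lambda>\<tau>. scaleK a (f \<tau>)) \<le> 0" using le[OF f, of a] True by simp
    moreover have "pn \<epsilon> (\<lambda>\<tau>. scaleK a (f \<tau>)) \<ge> 0" using pn_nonneg L_scale f by blast
    ultimately show ?thesis using True by simp
  next
    case False
    have af: "(\<lambda>\<tau>. scaleK a (f \<tau>)) \<in> L" using L_scale f by blast
    have "pn \<epsilon> f = pn \<epsilon> (\<lambda>\<tau>. scaleK (inverse a) (scaleK a (f \<tau>)))"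
      using False by (simp add: sK_assoc sK_one)
    also have "\<dots> \<le> norm (inverse a) * pn \<epsilon> (\<lambda>\<tau>. scaleK a (f \<tau>))" using le[OF af] by blast
    finally have "norm a * pn \<epsilon> f \<le> norm a * (norm (inverse a) * pn \<epsilon> (\<lambda>\<tau>. scaleK a (f \<tau>)))"
      by (rule mult_left_mono) simp
    also have "\<dots> = pn \<epsilon> (\<lambda>\<tau>. scaleK a (f \<tau>))" using False by (simp add: norm_inverse)
    finally have "norm a * pn \<epsilon> f \<le> pn \<epsilon> (\<lambda>\<tau>. scaleK a (f \<tau>))" .
    thus ?thesis using le[OF f, of a] by linarith
  qed
next
  fix k
  show "\<exists>C. \<forall>f\<in>linf \<omega> deg k. pn \<epsilon> f \<le> C * nrm k f"
  proof (intro exI ballI)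
    fix f :: "'j \<Rightarrow> 'b" assume "f \<in> linf \<omega> deg k"
    hence "pn \<epsilon> f \<le> nrm k f / \<epsilon> k" using DS_single pn_le by blast
    thus "pn \<epsilon> f \<le> (1 / \<epsilon> k) * nrm k f" by simp
  qed
qed

end
end

context LBconv begin

lemma conv_cont_bound:
  assumes q: "SN q"
  shows "\<exists>p. SN p \<and> (\<forall>\<phi>\<in>L. \<forall>\<psi>\<in>L. q (conv \<phi> \<psi>) \<le> p \<phi> * p \<psi>)"
proof -
  obtain K Cst where KC: "\<And>k. Cst k > 0" "\<And>k \<phi> \<psi>. \<phi> \<in> linf \<omega> deg k \<Longrightarrow> \<psi> \<in> linf \<omega> deg k \<Longrightarrow>
   conv \<phi> \<psi> \<in> linf \<omega> deg (K k) \<and> nrm (K k) (conv \<phi> \<psi>) \<le> Cst k * (nrm k \<phi> * nrm k \<psi>)"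
    using conv_linf_ex by blast
  obtain c where c: "\<And>k f. f \<in> linf \<omega> deg k \<Longrightarrow> q f \<le> c k * nrm k f"
    using SN_D(4)[OF q] by metis
  define c' where "c' k = max (c k) 1" for k
  have c': "c' k > 0" "f \<in> linf \<omega> deg k \<Longrightarrow> q f \<le> c' k * nrm k f" for k f
  proof -
    show "c' k > 0" unfolding c'_def by simp
    assume f: "f \<in> linf \<omega> deg k"
    have "c k * nrm k f \<le> c' k * nrm k f" unfolding c'_def using nrm_nonneg[OF f] by (intro mult_right_mono) auto
    thus "q f \<le> c' k * nrm k f" using c[OF f] by linarith
  qed
  define A where "A k = c' (K k) * Cst k" for k
  have A: "A k > 0" for k unfolding A_def using c' KC by simp
  have jb: "q (conv \<Phi> \<Psi>) \<le> A j * (nrm j \<Phi> * nrm j \<Psi>)" if "\<Phi> \<in> linf \<omega> deg j" "\<Psi> \<in> linf \<omega> deg j" for j \<Phi> \<Psi>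
  proof -
    have "q (conv \<Phi> \<Psi>) \<le> c' (K j) * nrm (K j) (conv \<Phi> \<Psi>)" using c' KC(2)[OF that] by blast
    also have "\<dots> \<le> c' (K j) * (Cst j * (nrm j \<Phi> * nrm j \<Psi>))" using less_imp_le[OF c'(1)[of "K j"]] KC(2)[OF that] by (intro mult_left_mono) auto
    finally show ?thesis unfolding A_def by (simp add: mult.assoc)
  qed
  define \<epsilon> where "\<epsilon> k = min 1 (1 / A k)" for k
  have \<epsilon>: "\<epsilon> k > 0" "\<epsilon> k \<le> 1" "A k * \<epsilon> k \<le> 1" for k
    unfolding \<epsilon>_def using A[of k] by (auto simp: min_def field_simps)
  have pb: "q (conv \<Phi> \<Psi>) \<le> (nrm i \<Phi> / \<epsilon> i) * (nrm l \<Psi> / \<epsilon> l)"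
    if \<Phi>: "\<Phi> \<in> linf \<omega> deg i" and \<Psi>: "\<Psi> \<in> linf \<omega> deg l" for i l \<Phi> \<Psi>
  proof -
    have n: "nrm i \<Phi> \<ge> 0" "nrm l \<Psi> \<ge> 0" using nrm_nonneg \<Phi> \<Psi> by auto
    have key: "A j * (x * y) \<le> (x / \<epsilon> i') * (y / \<epsilon> j)" if "x \<ge> 0" "y \<ge> 0" for x y i' j
    proof -
      have "A j * (x * y) = (x * y) * (A j * \<epsilon> j) / \<epsilon> j" using \<epsilon>(1)[of j] by simp
      also have "\<dots> \<le> (x * y) / \<epsilon> j" using \<epsilon>(1,3)[of j] that by (intro divide_right_mono mult_left_le) auto
      also have "\<dots> \<le> (x * y) / \<epsilon> j / \<epsilon> i'"
      proof -
        have z: "(x * y) / \<epsilon> j \<ge> 0" using that \<epsilon>(1)[of j] by simp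
        have "(x * y) / \<epsilon> j * \<epsilon> i' \<le> (x * y) / \<epsilon> j" by (rule mult_left_le[OF \<epsilon>(2) z])
        thus ?thesis using pos_le_divide_eq[OF \<epsilon>(1)[of i']] by blast
      qed
      finally show ?thesis by (simp add: field_simps)
    qed
    show ?thesis
    proof (cases "i \<le> l")
      case True
      have \<Phi>': "\<Phi> \<in> linf \<omega> deg l" "nrm l \<Phi> \<le> nrm i \<Phi>" using linf_mono[OF \<Phi> True] by auto
      have "q (conv \<Phi> \<Psi>) \<le> A l * (nrm l \<Phi> * nrm l \<Psi>)" by (rule jb[OF \<Phi>'(1) \<Psi>])
      also have "\<dots> \<le> A l * (nrm i \<Phi> * nrm l \<Psi>)" using less_imp_le[OF A] \<Phi>' n by (intro mult_left_mono mult_right_mono) auto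
      also have "\<dots> \<le> (nrm i \<Phi> / \<epsilon> i) * (nrm l \<Psi> / \<epsilon> l)" by (rule key) (use n in auto)
      finally show ?thesis .
    next
      case False
      have \<Psi>': "\<Psi> \<in> linf \<omega> deg i" "nrm i \<Psi> \<le> nrm l \<Psi>" using linf_mono[OF \<Psi>] False by auto
      have "q (conv \<Phi> \<Psi>) \<le> A i * (nrm i \<Phi> * nrm i \<Psi>)" by (rule jb[OF \<Phi> \<Psi>'(1)])
      also have "\<dots> \<le> A i * (nrm l \<Psi> * nrm i \<Phi>)" using less_imp_le[OF A] \<Psi>' n by (simp add: mult.commute mult_left_mono mult_right_mono)
      also have "\<dots> \<le> (nrm l \<Psi> / \<epsilon> l) * (nrm i \<Phi> / \<epsilon> i)" by (rule key) (use n in auto)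
      finally show ?thesis by (simp add: mult.commute)
    qed
  qed
  have P4: "q (conv \<phi> \<psi>) \<le> v1 * v2" if vv: "v1 \<in> DS \<epsilon> \<phi>" "v2 \<in> DS \<epsilon> \<psi>" for \<phi> \<psi> v1 v2
  proof -
    obtain N1 \<Phi>1 where
      1: "v1 = (\<Sum>i<N1. nrm i (\<Phi>1 i) / \<epsilon> i)" "\<forall>i. \<Phi>1 i \<in> linf \<omega> deg i" "\<phi> = (\<lambda>\<tau>. \<Sum>i<N1. \<Phi>1 i \<tau>)"
      using vv(1) unfolding DS_def by blast
    obtain N2 \<Phi>2 where
      2: "v2 = (\<Sum>i<N2. nrm i (\<Phi>2 i) / \<epsilon> i)" "\<forall>i. \<Phi>2 i \<in> linf \<omega> deg i" "\<psi> = (\<lambda>\<tau>. \<Sum>i<N2. \<Phi>2 i \<tau>)"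
      using vv(2) unfolding DS_def by blast
    have L1: "\<Phi>1 i \<in> L" "\<Phi>2 i \<in> L" for i using 1(2) 2(2) L_iff by blast+
    have cL: "conv (\<Phi>1 i) (\<Phi>2 l) \<in> L" for i l using L_conv L1 by blast
    have "conv \<phi> \<psi> = (\<lambda>\<mu>. \<Sum>i<N1. \<Sum>l<N2. conv (\<Phi>1 i) (\<Phi>2 l) \<mu>)"
      unfolding 1(3) 2(3) by (simp add: conv_sum_l conv_sum_r)
    hence "q (conv \<phi> \<psi>) = q (\<lambda>\<mu>. \<Sum>i<N1. (\<lambda>\<mu>. \<Sum>l<N2. conv (\<Phi>1 i) (\<Phi>2 l) \<mu>) \<mu>)" by simp
    also have "\<dots> \<le> (\<Sum>i<N1. q (\<lambda>\<mu>. \<Sum>l<N2. conv (\<Phi>1 i) (\<Phi>2 l) \<mu>))"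
      by (rule SN_sum[OF q], rule L_sum, rule cL)
    also have "\<dots> \<le> (\<Sum>i<N1. \<Sum>l<N2. q (conv (\<Phi>1 i) (\<Phi>2 l)))"
      by (intro sum_mono SN_sum[OF q] cL)
    also have "\<dots> \<le> (\<Sum>i<N1. \<Sum>l<N2. (nrm i (\<Phi>1 i) / \<epsilon> i) * (nrm l (\<Phi>2 l) / \<epsilon> l))"
      by (intro sum_mono pb 1(2)[rule_format] 2(2)[rule_format])
    also have "\<dots> = v1 * v2" unfolding 1(1) 2(1) by (simp add: sum_product)
    finally show ?thesis .
  qed
  show ?thesis
  proof (intro exI conjI ballI)
    show "SN (pn \<epsilon>)" by (rule SN_pn) (use \<epsilon>(1) in blast)
    fix \<phi> \<psi> assume \<phi>: "\<phi> \<in> L" and \<psi>: "\<psi> \<in> L"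
    have "q (conv \<phi> \<psi>) \<le> pn \<epsilon> \<phi> * v2" if v2: "v2 \<in> DS \<epsilon> \<psi>" for v2
    proof -
      have "q (conv \<phi> \<psi>) \<le> v2 * pn \<epsilon> \<phi>"
        by (rule pn_bound[OF _ \<phi>]) (use \<epsilon>(1) P4 v2 DS_nonneg[of \<epsilon>, OF \<epsilon>(1) v2] in \<open>auto simp: mult.commute\<close>)
      thus ?thesis by (simp add: mult.commute)
    qed
    thus "q (conv \<phi> \<psi>) \<le> pn \<epsilon> \<phi> * pn \<epsilon> \<psi>"
      by (intro pn_bound[OF _ \<psi>]) (use \<epsilon>(1) pn_nonneg \<phi> in auto)
  qed
qed


lemma cont_conv: "continuous_map (prod_topology TT TT) TT (\<lambda>(\<phi>, \<psi>). conv \<phi> \<psi>)"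
proof (rule cont_crit)
  fix x assume "x \<in> topspace (prod_topology TT TT)"
  then obtain \<phi>0 \<psi>0 where x: "x = (\<phi>0, \<psi>0)" "\<phi>0 \<in> L" "\<psi>0 \<in> L" by (auto simp: topspace_TT)
  thus "(case x of (\<phi>, \<psi>) \<Rightarrow> conv \<phi> \<psi>) \<in> L" using L_conv by simp
  fix q and e :: real assume q: "SN q" and e: "e > 0"
  obtain p where p: "SN p" "\<And>\<phi> \<psi>. \<phi> \<in> L \<Longrightarrow> \<psi> \<in> L \<Longrightarrow> q (conv \<phi> \<psi>) \<le> p \<phi> * p \<psi>"
    using conv_cont_bound[OF q] by blast
  have p0: "p \<phi>0 \<ge> 0" "p \<psi>0 \<ge> 0" using SN_D(1)[OF p(1)] x by auto
  define M where "M = p \<phi>0 + p \<psi>0 + 1"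
  have M: "M > 0" unfolding M_def using p0 by simp
  define \<eta> where "\<eta> = min 1 (e / (2 * M))"
  have \<eta>: "\<eta> > 0" "\<eta> \<le> 1" "\<eta> * M \<le> e / 2"
  proof -
    show "\<eta> > 0" "\<eta> \<le> 1" unfolding \<eta>_def using e M by auto
    have "\<eta> * M \<le> (e / (2 * M)) * M" unfolding \<eta>_def using M by (intro mult_right_mono) auto
    also have "\<dots> = e / 2" using M by (rule aux_div)
    finally show "\<eta> * M \<le> e / 2" .
  qed
  let ?V = "{h\<in>L. p (\<lambda>\<tau>. h \<tau> - \<phi>0 \<tau>) < \<eta>} \<times> {h\<in>L. p (\<lambda>\<tau>. h \<tau> - \<psi>0 \<tau>) < \<eta>}"
  show "\<exists>V. openin (prod_topology TT TT) V \<and> x \<in> V \<and>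
          (\<forall>y\<in>V. q (\<lambda>\<tau>. (case y of (\<phi>, \<psi>) \<Rightarrow> conv \<phi> \<psi>) \<tau> - (case x of (\<phi>, \<psi>) \<Rightarrow> conv \<phi> \<psi>) \<tau>) < e)"
  proof (intro exI conjI ballI)
    show "openin (prod_topology TT TT) ?V"
    proof (rule openin_prod_Times_iff[THEN iffD2], rule disjI2, rule disjI2, rule conjI)
      show "openin TT {h\<in>L. p (\<lambda>\<tau>. h \<tau> - \<phi>0 \<tau>) < \<eta>}" by (rule ball_open[OF p(1) x(2)])
      show "openin TT {h\<in>L. p (\<lambda>\<tau>. h \<tau> - \<psi>0 \<tau>) < \<eta>}" by (rule ball_open[OF p(1) x(3)])
    qed
    show "x \<in> ?V" using x \<eta> SN_zero[OF p(1)] by simp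
    fix y assume "y \<in> ?V"
    then obtain \<phi> \<psi> where y: "y = (\<phi>, \<psi>)" "\<phi> \<in> L" "\<psi> \<in> L" "p (\<lambda>\<tau>. \<phi> \<tau> - \<phi>0 \<tau>) < \<eta>" "p (\<lambda>\<tau>. \<psi> \<tau> - \<psi>0 \<tau>) < \<eta>"
      by auto
    define d1 where "d1 = (\<lambda>\<tau>. \<phi> \<tau> - \<phi>0 \<tau>)"
    define d2 where "d2 = (\<lambda>\<tau>. \<psi> \<tau> - \<psi>0 \<tau>)"
    have d: "d1 \<in> L" "d2 \<in> L" unfolding d1_def d2_def using L_diff x y by auto
    have dp: "p d1 \<ge> 0" "p d2 \<ge> 0" "p d1 < \<eta>" "p d2 < \<eta>" using SN_D(1)[OF p(1)] d y unfolding d1_def d2_def by auto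
    have eq: "(\<lambda>\<tau>. conv \<phi> \<psi> \<tau> - conv \<phi>0 \<psi>0 \<tau>) = (\<lambda>\<tau>. (conv d1 \<psi>0 \<tau> + conv \<phi>0 d2 \<tau>) + conv d1 d2 \<tau>)"
      unfolding d1_def d2_def by (simp add: conv_diff_l conv_diff_r algebra_simps)
    have cL: "conv d1 \<psi>0 \<in> L" "conv \<phi>0 d2 \<in> L" "conv d1 d2 \<in> L" using L_conv d x by auto
    have "q (\<lambda>\<tau>. conv \<phi> \<psi> \<tau> - conv \<phi>0 \<psi>0 \<tau>) \<le> q (\<lambda>\<tau>. conv d1 \<psi>0 \<tau> + conv \<phi>0 d2 \<tau>) + q (conv d1 d2)"
      unfolding eq by (rule SN_D(2)[OF q]) (use L_add cL in auto)
    also have "\<dots> \<le> (q (conv d1 \<psi>0) + q (conv \<phi>0 d2)) + q (conv d1 d2)"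
      using SN_D(2)[OF q cL(1) cL(2)] by simp
    also have "\<dots> \<le> (p d1 * p \<psi>0 + p \<phi>0 * p d2) + p d1 * p d2"
      using p(2)[OF d(1) x(3)] p(2)[OF x(2) d(2)] p(2)[OF d(1) d(2)] by linarith
    also have "\<dots> \<le> (\<eta> * p \<psi>0 + p \<phi>0 * \<eta>) + \<eta> * 1"
    proof -
      have "p d1 * p \<psi>0 \<le> \<eta> * p \<psi>0" using dp p0 by (intro mult_right_mono) auto
      moreover have "p \<phi>0 * p d2 \<le> p \<phi>0 * \<eta>" using dp p0 by (intro mult_left_mono) auto
      moreover have "p d1 * p d2 \<le> \<eta> * 1" using dp \<eta> by (intro mult_mono) auto
      ultimately show ?thesis by linarith
    qed
    also have "\<dots> = \<eta> * M" unfolding M_def by (simp add: algebra_simps)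
    finally have "q (\<lambda>\<tau>. conv \<phi> \<psi> \<tau> - conv \<phi>0 \<psi>0 \<tau>) < e" using \<eta>(3) e by linarith
    thus "q (\<lambda>\<tau>. (case y of (\<phi>, \<psi>) \<Rightarrow> conv \<phi> \<psi>) \<tau> - (case x of (\<phi>, \<psi>) \<Rightarrow> conv \<phi> \<psi>) \<tau>) < e"
      using x y by simp
  qed
qed

end

context LBset begin

lemma sK_sum2: "scaleK (\<Sum>i\<in>I. a i) x = (\<Sum>i\<in>I. scaleK (a i) x)"
  by (induction I rule: infinite_finite_induct) (auto simp: sK_zero2 sK_add2)

lemma unit_gen:
  fixes c :: "'p \<Rightarrow> 'k" and g :: "'p \<Rightarrow> 'x"
  assumes P: "finite P" and ax: "\<And>\<nu>. (\<Sum>p\<in>P. c p * (if g p = \<nu> then 1 else 0)) = (if \<mu> = \<nu> then 1 else 0)"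
  shows "(\<Sum>p\<in>P. scaleK (c p) (\<phi> (g p))) = \<phi> \<mu>"
proof -
  define F where "F = insert \<mu> (g ` P)"
  have F: "finite F" "\<mu> \<in> F" "\<And>p. p \<in> P \<Longrightarrow> g p \<in> F" unfolding F_def using P by auto
  have "(\<Sum>p\<in>P. scaleK (c p) (\<phi> (g p))) = (\<Sum>p\<in>P. \<Sum>\<nu>\<in>F. scaleK (c p * (if g p = \<nu> then 1 else 0)) (\<phi> \<nu>))"
  proof (rule sum.cong[OF refl])
    fix p assume p: "p \<in> P"
    have "(\<Sum>\<nu>\<in>F. scaleK (c p * (if g p = \<nu> then 1 else 0)) (\<phi> \<nu>)) = (\<Sum>\<nu>\<in>F. if \<nu> = g p then scaleK (c p) (\<phi> \<nu>) else 0)"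
      by (rule sum.cong) (auto simp: sK_zero2)
    also have "\<dots> = scaleK (c p) (\<phi> (g p))" using F p by simp
    finally show "scaleK (c p) (\<phi> (g p)) = (\<Sum>\<nu>\<in>F. scaleK (c p * (if g p = \<nu> then 1 else 0)) (\<phi> \<nu>))" by simp
  qed
  also have "\<dots> = (\<Sum>\<nu>\<in>F. scaleK (\<Sum>p\<in>P. c p * (if g p = \<nu> then 1 else 0)) (\<phi> \<nu>))"
    by (simp add: sum.swap[of _ P] sK_sum2)
  also have "\<dots> = (\<Sum>\<nu>\<in>F. if \<nu> = \<mu> then \<phi> \<nu> else 0)"
    by (rule sum.cong) (auto simp: ax sK_zero2 sK_one)
  also have "\<dots> = \<phi> \<mu>" using F by simp
  finally show ?thesis .
qed

lemma regroup:
  assumes A: "finite A" and B: "\<And>x. x \<in> A \<Longrightarrow> finite (B x)" and T: "finite T"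
    and h: "\<And>x y. x \<in> A \<Longrightarrow> y \<in> B x \<Longrightarrow> h x y \<in> T"
  shows "(\<Sum>x\<in>A. \<Sum>y\<in>B x. scaleK (c x y) (w (h x y))) =
         (\<Sum>t\<in>T. scaleK (\<Sum>x\<in>A. \<Sum>y\<in>B x. c x y * (if h x y = t then 1 else 0)) (w t))"
proof -
  have "(\<Sum>x\<in>A. \<Sum>y\<in>B x. scaleK (c x y) (w (h x y))) =
        (\<Sum>x\<in>A. \<Sum>y\<in>B x. \<Sum>t\<in>T. scaleK (c x y * (if h x y = t then 1 else 0)) (w t))"
  proof (intro sum.cong[OF refl])
    fix x y assume xy: "x \<in> A" "y \<in> B x"
    have "(\<Sum>t\<in>T. scaleK (c x y * (if h x y = t then 1 else 0)) (w t)) = (\<Sum>t\<in>T. if t = h x y then scaleK (c x y) (w t) else 0)"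
      by (rule sum.cong) (auto simp: sK_zero2)
    also have "\<dots> = scaleK (c x y) (w (h x y))" using T h[OF xy] by simp
    finally show "scaleK (c x y) (w (h x y)) = (\<Sum>t\<in>T. scaleK (c x y * (if h x y = t then 1 else 0)) (w t))" by simp
  qed
  also have "\<dots> = (\<Sum>x\<in>A. \<Sum>t\<in>T. \<Sum>y\<in>B x. scaleK (c x y * (if h x y = t then 1 else 0)) (w t))"
    by (rule sum.cong[OF refl]) (rule sum.swap)
  also have "\<dots> = (\<Sum>t\<in>T. \<Sum>x\<in>A. \<Sum>y\<in>B x. scaleK (c x y * (if h x y = t then 1 else 0)) (w t))"
    by (rule sum.swap)
  also have "\<dots> = (\<Sum>t\<in>T. scaleK (\<Sum>x\<in>A. \<Sum>y\<in>B x. c x y * (if h x y = t then 1 else 0)) (w t))"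
    by (simp add: sK_sum2)
  finally show ?thesis .
qed

lemma delta_supp:
  fixes f :: "'a \<Rightarrow> 'k"
  assumes "finite (supp f)"
  shows "(\<Sum>r\<in>supp f. f r * (if r = x then 1 else 0)) = f x"
proof -
  have "(\<Sum>r\<in>supp f. f r * (if r = x then 1 else 0)) = (\<Sum>r\<in>supp f. if r = x then f x else 0)"
    by (rule sum.cong) auto
  also have "\<dots> = f x" using assms by (auto simp: supp_def)
  finally show ?thesis .
qed


lemma conv_unit_l:
  assumes fin: "finite (supp (\<Delta> \<mu>))"
    and cu: "\<And>\<nu>. (\<Sum>p\<in>supp (\<Delta> \<mu>). \<Delta> \<mu> p * \<epsilon> (fst p) * (if snd p = \<nu> then 1 else 0)) = (if \<mu> = \<nu> then 1 else 0)"
  shows "convolution \<Delta> scaleK (conv_unit \<epsilon> scaleK) \<phi> \<mu> = \<phi> \<mu>"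
proof -
  have "convolution \<Delta> scaleK (conv_unit \<epsilon> scaleK) \<phi> \<mu> = (\<Sum>p\<in>supp (\<Delta> \<mu>). scaleK (\<Delta> \<mu> p * \<epsilon> (fst p)) (\<phi> (snd p)))"
    unfolding convolution_def conv_unit_def
    by (rule sum.cong[OF refl]) (simp add: sK_mult[symmetric] sK_assoc)
  also have "\<dots> = \<phi> \<mu>" by (rule unit_gen[OF fin]) (use cu in \<open>simp add: mult.assoc\<close>)
  finally show ?thesis .
qed

lemma conv_unit_r:
  assumes fin: "finite (supp (\<Delta> \<mu>))"
    and cu: "\<And>\<nu>. (\<Sum>p\<in>supp (\<Delta> \<mu>). \<Delta> \<mu> p * (if fst p = \<nu> then 1 else 0) * \<epsilon> (snd p)) = (if \<mu> = \<nu> then 1 else 0)"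
  shows "convolution \<Delta> scaleK \<phi> (conv_unit \<epsilon> scaleK) \<mu> = \<phi> \<mu>"
proof -
  have "convolution \<Delta> scaleK \<phi> (conv_unit \<epsilon> scaleK) \<mu> = (\<Sum>p\<in>supp (\<Delta> \<mu>). scaleK (\<Delta> \<mu> p * \<epsilon> (snd p)) (\<phi> (fst p)))"
    unfolding convolution_def conv_unit_def
    by (rule sum.cong[OF refl]) (simp add: sK_mult2[symmetric] sK_assoc)
  also have "\<dots> = \<phi> \<mu>" by (rule unit_gen[OF fin]) (use cu in \<open>simp add: ac_simps\<close>)
  finally show ?thesis .
qed

lemma conv_assoc:
  fixes \<Delta> :: "'m \<Rightarrow> 'm \<times> 'm \<Rightarrow> 'k"
  assumes fin: "\<And>\<mu>. finite (supp (\<Delta> \<mu>))"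
    and ca: "\<And>a b c. (\<Sum>p\<in>supp (\<Delta> \<mu>). \<Delta> \<mu> p * (if snd p = c then \<Delta> (fst p) (a, b) else 0)) =
        (\<Sum>p\<in>supp (\<Delta> \<mu>). \<Delta> \<mu> p * (if fst p = a then \<Delta> (snd p) (b, c) else 0))"
  shows "convolution \<Delta> scaleK (convolution \<Delta> scaleK \<phi> \<psi>) \<rho> \<mu> = convolution \<Delta> scaleK \<phi> (convolution \<Delta> scaleK \<psi> \<rho>) \<mu>"
proof -
  define P where "P = supp (\<Delta> \<mu>)"
  define w where "w t = \<phi> (fst t) * \<psi> (fst (snd t)) * \<rho> (snd (snd t))" for t
  define T where "T = (\<lambda>(p, r). (fst r, snd r, snd p)) ` (SIGMA p:P. supp (\<Delta> (fst p))) \<union>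
                      (\<lambda>(p, r). (fst p, fst r, snd r)) ` (SIGMA p:P. supp (\<Delta> (snd p)))"
  have P: "finite P" unfolding P_def by (rule fin)
  have T: "finite T" unfolding T_def using P fin by auto
  have "convolution \<Delta> scaleK (convolution \<Delta> scaleK \<phi> \<psi>) \<rho> \<mu> =
     (\<Sum>p\<in>P. \<Sum>r\<in>supp (\<Delta> (fst p)). scaleK (\<Delta> \<mu> p * \<Delta> (fst p) r) (w ((\<lambda>p r. (fst r, snd r, snd p)) p r)))"
    unfolding convolution_def P_def w_def
    by (rule sum.cong[OF refl]) (simp add: sum_distrib_right sK_mult[symmetric] sK_sum sK_assoc)
  also have "\<dots> = (\<Sum>t\<in>T. scaleK (\<Sum>p\<in>P. \<Sum>r\<in>supp (\<Delta> (fst p)). \<Delta> \<mu> p * \<Delta> (fst p) r *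
        (if (fst r, snd r, snd p) = t then 1 else 0)) (w t))"
    by (rule regroup[OF P fin T]) (auto simp: T_def)
  also have "\<dots> = (\<Sum>t\<in>T. scaleK (\<Sum>p\<in>P. \<Sum>r\<in>supp (\<Delta> (snd p)). \<Delta> \<mu> p * \<Delta> (snd p) r *
        (if (fst p, fst r, snd r) = t then 1 else 0)) (w t))"
  proof (rule sum.cong[OF refl])
    fix t :: "'m \<times> 'm \<times> 'm"
    obtain a b c where t: "t = (a, b, c)" by (cases t) auto
    have L: "(\<Sum>r\<in>supp (\<Delta> (fst p)). \<Delta> \<mu> p * \<Delta> (fst p) r * (if (fst r, snd r, snd p) = t then 1 else 0))
        = \<Delta> \<mu> p * (if snd p = c then \<Delta> (fst p) (a, b) else 0)" for p
    proof (cases "snd p = c")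
      case True
      have "(\<Sum>r\<in>supp (\<Delta> (fst p)). \<Delta> \<mu> p * \<Delta> (fst p) r * (if (fst r, snd r, snd p) = t then 1 else 0))
         = \<Delta> \<mu> p * (\<Sum>r\<in>supp (\<Delta> (fst p)). \<Delta> (fst p) r * (if r = (a, b) then 1 else 0))"
        unfolding sum_distrib_left by (rule sum.cong[OF refl]) (use True t in \<open>auto simp: prod_eq_iff\<close>)
      thus ?thesis using delta_supp[OF fin] True by simp
    qed (auto simp: t)
    have R: "(\<Sum>r\<in>supp (\<Delta> (snd p)). \<Delta> \<mu> p * \<Delta> (snd p) r * (if (fst p, fst r, snd r) = t then 1 else 0))
        = \<Delta> \<mu> p * (if fst p = a then \<Delta> (snd p) (b, c) else 0)" for p
    proof (cases "fst p = a")
      case True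
      have "(\<Sum>r\<in>supp (\<Delta> (snd p)). \<Delta> \<mu> p * \<Delta> (snd p) r * (if (fst p, fst r, snd r) = t then 1 else 0))
         = \<Delta> \<mu> p * (\<Sum>r\<in>supp (\<Delta> (snd p)). \<Delta> (snd p) r * (if r = (b, c) then 1 else 0))"
        unfolding sum_distrib_left by (rule sum.cong[OF refl]) (use True t in \<open>auto simp: prod_eq_iff\<close>)
      thus ?thesis using delta_supp[OF fin] True by simp
    qed (auto simp: t)
    show "scaleK (\<Sum>p\<in>P. \<Sum>r\<in>supp (\<Delta> (fst p)). \<Delta> \<mu> p * \<Delta> (fst p) r * (if (fst r, snd r, snd p) = t then 1 else 0)) (w t) =
          scaleK (\<Sum>p\<in>P. \<Sum>r\<in>supp (\<Delta> (snd p)). \<Delta> \<mu> p * \<Delta> (snd p) r * (if (fst p, fst r, snd r) = t then 1 else 0)) (w t)"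
      unfolding L R P_def using ca by simp
  qed
  also have "\<dots> = (\<Sum>p\<in>P. \<Sum>r\<in>supp (\<Delta> (snd p)). scaleK (\<Delta> \<mu> p * \<Delta> (snd p) r) (w ((\<lambda>p r. (fst p, fst r, snd r)) p r)))"
    by (rule regroup[symmetric, OF P fin T]) (auto simp: T_def)
  also have "\<dots> = convolution \<Delta> scaleK \<phi> (convolution \<Delta> scaleK \<psi> \<rho>) \<mu>"
    unfolding convolution_def P_def w_def
    by (rule sum.cong[OF refl]) (simp add: sum_distrib_left sK_mult2[symmetric] sK_sum sK_assoc mult.assoc)
  finally show ?thesis .
qed

end




theorem proposition3p9:
  fixes scaleK :: "'k::real_normed_field \<Rightarrow> 'b::{banach,real_normed_algebra_1,comm_ring_1} \<Rightarrow> 'b"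
    and \<omega> :: "nat \<Rightarrow> nat \<Rightarrow> nat"
    and \<Sigma> :: "'m::monoid_mult set"
    and deg :: "'m \<Rightarrow> nat"
    and \<Delta> :: "'m \<Rightarrow> 'm \<times> 'm \<Rightarrow> 'k"
    and \<epsilon> :: "'m \<Rightarrow> 'k"
    and S :: "'m \<Rightarrow> 'm \<Rightarrow> 'k"
  assumes "is_R_or_C TYPE('k)"
    and "K_banach_algebra scaleK"
    and "convex_growth_family \<omega>"
    and "combinatorial_hopf \<Sigma> deg \<Delta> \<epsilon> S"
    and "control_pair deg \<Delta> S \<omega>"
  defines "L \<equiv> linf_ind \<omega> deg :: ('m \<Rightarrow> 'b) set"
    and "T \<equiv> LB_topology \<omega> deg scaleK"
    and "conv \<equiv> convolution \<Delta> scaleK"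
    and "u \<equiv> conv_unit \<epsilon> scaleK"
  shows
    \<comment> \<open>L is a K-vector space, closed under convolution, containing the unit\<close>
    "(\<forall>\<phi>\<in>L. \<forall>\<psi>\<in>L. (\<lambda>\<mu>. \<phi> \<mu> + \<psi> \<mu>) \<in> L) \<and> (\<forall>a. \<forall>\<phi>\<in>L. (\<lambda>\<mu>. scaleK a (\<phi> \<mu>)) \<in> L) \<and>
     (\<forall>\<phi>\<in>L. \<forall>\<psi>\<in>L. conv \<phi> \<psi> \<in> L) \<and> u \<in> L \<and>
     \<comment> \<open>associative unital K-algebra\<close>
     (\<forall>\<phi>\<in>L. \<forall>\<psi>\<in>L. \<forall>\<rho>\<in>L. conv (conv \<phi> \<psi>) \<rho> = conv \<phi> (conv \<psi> \<rho>)) \<and>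
     (\<forall>\<phi>\<in>L. conv u \<phi> = \<phi> \<and> conv \<phi> u = \<phi>) \<and>
     (\<forall>\<phi>\<in>L. \<forall>\<phi>'\<in>L. \<forall>\<psi>\<in>L.
        conv (\<lambda>\<mu>. \<phi> \<mu> + \<phi>' \<mu>) \<psi> = (\<lambda>\<mu>. conv \<phi> \<psi> \<mu> + conv \<phi>' \<psi> \<mu>) \<and>
        conv \<psi> (\<lambda>\<mu>. \<phi> \<mu> + \<phi>' \<mu>) = (\<lambda>\<mu>. conv \<psi> \<phi> \<mu> + conv \<psi> \<phi>' \<mu>)) \<and>
     (\<forall>a. \<forall>\<phi>\<in>L. \<forall>\<psi>\<in>L.
        conv (\<lambda>\<mu>. scaleK a (\<phi> \<mu>)) \<psi> = (\<lambda>\<mu>. scaleK a (conv \<phi> \<psi> \<mu>)) \<and>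
        conv \<psi> (\<lambda>\<mu>. scaleK a (\<phi> \<mu>)) = (\<lambda>\<mu>. scaleK a (conv \<psi> \<phi> \<mu>))) \<and>
     \<comment> \<open>topological algebra w.r.t. the locally convex inductive limit topology on L\<close>
     topspace T = L \<and>
     continuous_map (prod_topology T T) T (\<lambda>(\<phi>, \<psi>). (\<lambda>\<mu>. \<phi> \<mu> + \<psi> \<mu>)) \<and>
     continuous_map (prod_topology (euclidean :: 'k topology) T) T (\<lambda>(a, \<phi>). (\<lambda>\<mu>. scaleK a (\<phi> \<mu>))) \<and>
     continuous_map (prod_topology T T) T (\<lambda>(\<phi>, \<psi>). conv \<phi> \<psi>)"
  proof -
  have KB: "K_banach_algebra scaleK" by fact
  have GF: "growth_family \<omega>" using assms(3) unfolding convex_growth_family_def by blast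
  have H: "graded_connected_hopf deg \<Delta> \<epsilon> S" using assms(4) unfolding combinatorial_hopf_def by blast
  note H' = H[unfolded graded_connected_hopf_def]
  have fin: "\<And>\<mu>. finite (supp (\<Delta> \<mu>))" using H'[THEN conjunct1] by blast
  have extH: "extends_continuously \<omega> deg (\<lambda>p. deg (fst p) + deg (snd p)) \<Delta>"
    using assms(5) unfolding control_pair_def by blast
  interpret LBconv scaleK \<omega> deg \<Delta>
    by (unfold_locales) (use KB GF fin extH in auto)
  have ca: "\<And>\<mu> a b c. (\<Sum>p\<in>supp (\<Delta> \<mu>). \<Delta> \<mu> p * (if snd p = c then \<Delta> (fst p) (a, b) else 0)) =
        (\<Sum>p\<in>supp (\<Delta> \<mu>). \<Delta> \<mu> p * (if fst p = a then \<Delta> (snd p) (b, c) else 0))"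
    using H'[THEN conjunct2, THEN conjunct2, THEN conjunct2, THEN conjunct2, THEN conjunct2, THEN conjunct2, THEN conjunct2, THEN conjunct2, THEN conjunct1] by blast
  have cu1: "\<And>\<mu> \<nu>. (\<Sum>p\<in>supp (\<Delta> \<mu>). \<Delta> \<mu> p * \<epsilon> (fst p) * (if snd p = \<nu> then 1 else 0)) = (if \<mu> = \<nu> then 1 else 0)"
    using H'[THEN conjunct2, THEN conjunct2, THEN conjunct2, THEN conjunct2, THEN conjunct2, THEN conjunct2, THEN conjunct2, THEN conjunct2, THEN conjunct2, THEN conjunct1] by blast
  have cu2: "\<And>\<mu> \<nu>. (\<Sum>p\<in>supp (\<Delta> \<mu>). \<Delta> \<mu> p * (if fst p = \<nu> then 1 else 0) * \<epsilon> (snd p)) = (if \<mu> = \<nu> then 1 else 0)"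
    using H'[THEN conjunct2, THEN conjunct2, THEN conjunct2, THEN conjunct2, THEN conjunct2, THEN conjunct2, THEN conjunct2, THEN conjunct2, THEN conjunct2, THEN conjunct2, THEN conjunct1] by blast
  have eps: "\<And>\<mu>. \<epsilon> \<mu> \<noteq> 0 \<Longrightarrow> \<mu> = 1" "\<epsilon> 1 = 1"
  proof -
    show "\<And>\<mu>. \<epsilon> \<mu> \<noteq> 0 \<Longrightarrow> \<mu> = 1" using H'[THEN conjunct2, THEN conjunct2, THEN conjunct2, THEN conjunct2, THEN conjunct1] H'[THEN conjunct2, THEN conjunct2, THEN conjunct2, THEN conjunct2, THEN conjunct2, THEN conjunct2, THEN conjunct1] by blast
    show "\<epsilon> 1 = 1" using H'[THEN conjunct2, THEN conjunct2, THEN conjunct2, THEN conjunct2, THEN conjunct2, THEN conjunct2, THEN conjunct2, THEN conjunct2, THEN conjunct2, THEN conjunct2, THEN conjunct2, THEN conjunct2, THEN conjunct2, THEN conjunct2, THEN conjunct1] by blast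
  qed
  have uL: "conv_unit \<epsilon> scaleK \<in> linf_ind \<omega> deg"
  proof -
    have "norm (conv_unit \<epsilon> scaleK \<mu>) \<le> 1 * real (\<omega> 0 (deg \<mu>))" for \<mu>
    proof -
      have "norm (conv_unit \<epsilon> scaleK \<mu>) = norm (\<epsilon> \<mu>)" unfolding conv_unit_def by (simp add: sK_norm)
      also have "\<dots> \<le> 1"
      proof (cases "\<epsilon> \<mu> = 0")
        case False
        hence "\<mu> = 1" using eps(1) by blast
        thus ?thesis using eps(2) by simp
      qed simp
      also have "\<dots> \<le> 1 * real (\<omega> 0 (deg \<mu>))" using om_ge1[of 0 "deg \<mu>"] by simp
      finally show ?thesis .
    qed
    thus ?thesis using linfI L_iff by blast
  qed
  show ?thesis
    unfolding L_def T_def conv_def u_def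
  proof (intro conjI ballI allI)
    show "\<And>(\<phi>::'m\<Rightarrow>'b) \<psi>. \<phi> \<in> linf_ind \<omega> deg \<Longrightarrow> \<psi> \<in> linf_ind \<omega> deg \<Longrightarrow> (\<lambda>\<mu>. \<phi> \<mu> + \<psi> \<mu>) \<in> linf_ind \<omega> deg"
      by (rule L_add)
    show "\<And>a (\<phi>::'m\<Rightarrow>'b). \<phi> \<in> linf_ind \<omega> deg \<Longrightarrow> (\<lambda>\<mu>. scaleK a (\<phi> \<mu>)) \<in> linf_ind \<omega> deg" by (rule L_scale)
    show "\<And>(\<phi>::'m\<Rightarrow>'b) \<psi>. \<phi> \<in> linf_ind \<omega> deg \<Longrightarrow> \<psi> \<in> linf_ind \<omega> deg \<Longrightarrow> convolution \<Delta> scaleK \<phi> \<psi> \<in> linf_ind \<omega> deg" by (rule L_conv)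
    show "conv_unit \<epsilon> scaleK \<in> linf_ind \<omega> deg" by (rule uL)
    show "\<And>(\<phi>::'m\<Rightarrow>'b) \<psi> \<rho>. convolution \<Delta> scaleK (convolution \<Delta> scaleK \<phi> \<psi>) \<rho> = convolution \<Delta> scaleK \<phi> (convolution \<Delta> scaleK \<psi> \<rho>)"
      proof -
      fix \<phi> \<psi> \<rho> :: "'m \<Rightarrow> 'b"
      show "convolution \<Delta> scaleK (convolution \<Delta> scaleK \<phi> \<psi>) \<rho> = convolution \<Delta> scaleK \<phi> (convolution \<Delta> scaleK \<psi> \<rho>)"
      proof
        fix \<mu>
        show "convolution \<Delta> scaleK (convolution \<Delta> scaleK \<phi> \<psi>) \<rho> \<mu> = convolution \<Delta> scaleK \<phi> (convolution \<Delta> scaleK \<psi> \<rho>) \<mu>"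
          by (rule conv_assoc) (use fin ca in auto)
      qed
    qed
    show "\<And>(\<phi>::'m\<Rightarrow>'b). convolution \<Delta> scaleK (conv_unit \<epsilon> scaleK) \<phi> = \<phi>" proof -
      fix \<phi> :: "'m \<Rightarrow> 'b"
      show "convolution \<Delta> scaleK (conv_unit \<epsilon> scaleK) \<phi> = \<phi>"
      proof
        fix \<mu>
        show "convolution \<Delta> scaleK (conv_unit \<epsilon> scaleK) \<phi> \<mu> = \<phi> \<mu>" by (rule conv_unit_l) (use fin cu1 in auto)
      qed
    qed
    show "\<And>(\<phi>::'m\<Rightarrow>'b). convolution \<Delta> scaleK \<phi> (conv_unit \<epsilon> scaleK) = \<phi>" proof -
      fix \<phi> :: "'m \<Rightarrow> 'b"
      show "convolution \<Delta> scaleK \<phi> (conv_unit \<epsilon> scaleK) = \<phi>"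
      proof
        fix \<mu>
        show "convolution \<Delta> scaleK \<phi> (conv_unit \<epsilon> scaleK) \<mu> = \<phi> \<mu>" by (rule conv_unit_r) (use fin cu2 in auto)
      qed
    qed
    show "\<And>(\<phi>::'m\<Rightarrow>'b) \<phi>' \<psi>. convolution \<Delta> scaleK (\<lambda>\<mu>. \<phi> \<mu> + \<phi>' \<mu>) \<psi> = (\<lambda>\<mu>. convolution \<Delta> scaleK \<phi> \<psi> \<mu> + convolution \<Delta> scaleK \<phi>' \<psi> \<mu>)" by (rule conv_add_l)
    show "\<And>(\<phi>::'m\<Rightarrow>'b) \<phi>' \<psi>. convolution \<Delta> scaleK \<psi> (\<lambda>\<mu>. \<phi> \<mu> + \<phi>' \<mu>) = (\<lambda>\<mu>. convolution \<Delta> scaleK \<psi> \<phi> \<mu> + convolution \<Delta> scaleK \<psi> \<phi>' \<mu>)" by (rule conv_add_r)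
    show "\<And>a (\<phi>::'m\<Rightarrow>'b) \<psi>. convolution \<Delta> scaleK (\<lambda>\<mu>. scaleK a (\<phi> \<mu>)) \<psi> = (\<lambda>\<mu>. scaleK a (convolution \<Delta> scaleK \<phi> \<psi> \<mu>))" by (rule conv_scale_l)
    show "\<And>a (\<phi>::'m\<Rightarrow>'b) \<psi>. convolution \<Delta> scaleK \<psi> (\<lambda>\<mu>. scaleK a (\<phi> \<mu>)) = (\<lambda>\<mu>. scaleK a (convolution \<Delta> scaleK \<psi> \<phi> \<mu>))" by (rule conv_scale_r)
    show "topspace (LB_topology \<omega> deg scaleK) = linf_ind \<omega> deg" by (rule topspace_TT)
    show "continuous_map (prod_topology (LB_topology \<omega> deg scaleK) (LB_topology \<omega> deg scaleK)) (LB_topology \<omega> deg scaleK)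
     (\<lambda>(\<phi>, \<psi>). \<lambda>\<mu>. \<phi> \<mu> + \<psi> \<mu>)" by (rule cont_add)
    show "continuous_map (prod_topology euclidean (LB_topology \<omega> deg scaleK)) (LB_topology \<omega> deg scaleK)
     (\<lambda>(a, \<phi>). \<lambda>\<mu>. scaleK a (\<phi> \<mu>))" by (rule cont_scale)
    show "continuous_map (prod_topology (LB_topology \<omega> deg scaleK) (LB_topology \<omega> deg scaleK)) (LB_topology \<omega> deg scaleK)
     (\<lambda>(\<phi>, \<psi>). convolution \<Delta> scaleK \<phi> \<psi>)" by (rule cont_conv)
  qed
qed


end
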